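(* Let $k\geq 3$ and let $\mathcal{G}$ be a $k$-uniform unicyclic hypergraph of order $n$. Then $\rho(\mathcal{G})\leq\rho(\mathscr{U}^{\ast})$, with equality if and only if $\mathcal{G}\cong \mathscr{U}^{\ast}$.
   Context: A hypergraph $\mathcal{G}=(V,E)$ has a nonempty finite vertex set $V$ and an edge set $E$ of subsets of $V$, each of size at least $2$; all hypergraphs are simple (no repeated edges) and undirected. It is $k$-uniform if every edge has exactly $k$ vertices. Two vertices are adjacent if some edge contains both. A hyperpath of length $q$ is an alternating sequence $v_1e_1v_2\cdots v_qe_qv_{q+1}$ of distinct vertices and distinct edges with $v_i,v_{i+1}\in e_i$, $e_i\cap e_{i+1}=\{v_{i+1}\}$, and $e_i\cap e_j=\emptyset$ for $|i-j|\geq 2$; $\mathcal{G}$ is connected if any two vertices are joined by a hyperpath. A connected $k$-uniform hypergraph with $n$ vertices and $m$ edges is called unicyclic if $n-1=(k-1)m-1$, i.e. $n=(k-1)m$ (equivalently, it contains exactly one hypercycle). The adjacency matrix $\mathcal{A}_{\mathcal{G}}$ is the $|V|\times|V|$ matrix with $(\mathcal{A}_{\mathcal{G}})_{ij}=\sum_{e\in E,\ i,j\in e}\frac{1}{|e|-1}$ (for $i\neq j$; diagonal entries are $0$), and $\rho(\mathcal{G})$ is the spectral radius (largest modulus of an eigenvalue) of $\mathcal{A}_{\mathcal{G}}$. Let $\mathbb{C}$ be the $k$-uniform 2-hypercycle consisting of two edges $e_1,e_2$ with $e_1\cap e_2=\{v_1,v_2\}$, i.e. $e_i=\{v_1,v_{a(i,1)},\dots,v_{a(i,k-2)},v_2\}$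 ($i=1,2$) with all listed vertices distinct. Attaching a pendant edge at a vertex $v$ means adding a new edge consisting of $v$ and $k-1$ new vertices. $\mathscr{U}^{\ast}$ is the $k$-uniform unicyclic hypergraph of order $n$ obtained from $\mathbb{C}$ by attaching $\frac{n}{k-1}-2$ pendant edges at $v_1$. *)

theory Defs
  imports Complex_Main
begin

type_synonym 'a hypergraph = "'a set \<times> 'a set set"

definition hypergraph :: "'a hypergraph \<Rightarrow> bool" where
  "hypergraph G \<longleftrightarrow> finite (fst G) \<and> fst G \<noteq> {} \<and>
     (\<forall>e\<in>snd G. e \<subseteq> fst G \<and> card e \<ge> 2)"

definition uniform :: "nat \<Rightarrow> 'a hypergraph \<Rightarrow> bool" where
  "uniform k G \<longleftrightarrow> (\<forall>e\<in>snd G. card e = k)"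

definition hyperpath :: "'a hypergraph \<Rightarrow> 'a list \<Rightarrow> 'a set list \<Rightarrow> bool" where
  "hyperpath G vs es \<longleftrightarrow>
     length vs = Suc (length es) \<and> distinct vs \<and> distinct es \<and>
     set vs \<subseteq> fst G \<and> set es \<subseteq> snd G \<and>
     (\<forall>i<length es. vs ! i \<in> es ! i \<and> vs ! Suc i \<in> es ! i) \<and>
     (\<forall>i. Suc i < length es \<longrightarrow> es ! i \<inter> es ! Suc i = {vs ! Suc i}) \<and>
     (\<forall>i j. i < length es \<and> j < length es \<and> i + 2 \<le> j \<longrightarrow> es ! i \<inter> es ! j = {})"

definition hg_connected :: "'a hypergraph \<Rightarrow> bool" where
  "hg_connected G \<longleftrightarrow> (\<forall>u\<in>fst G. \<forall>v\<in>fst G. \<exists>vs es.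
      hyperpath G vs es \<and> hd vs = u \<and> last vs = v)"

definition unicyclic :: "nat \<Rightarrow> 'a hypergraph \<Rightarrow> bool" where
  "unicyclic k G \<longleftrightarrow> hypergraph G \<and> uniform k G \<and> hg_connected G \<and>
     card (fst G) = (k - 1) * card (snd G)"

definition adj :: "'a hypergraph \<Rightarrow> 'a \<Rightarrow> 'a \<Rightarrow> real" where
  "adj G i j = (if i = j then 0 else
      (\<Sum>e\<in>{e\<in>snd G. i \<in> e \<and> j \<in> e}. 1 / (real (card e) - 1)))"

definition hg_eigenvalue :: "'a hypergraph \<Rightarrow> complex \<Rightarrow> bool" where
  "hg_eigenvalue G mu \<longleftrightarrow> (\<exists>x :: 'a \<Rightarrow> complex. (\<exists>v\<in>fst G. x v \<noteq> 0) \<and>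
      (\<forall>i\<in>fst G. (\<Sum>j\<in>fst G. complex_of_real (adj G i j) * x j) = mu * x i))"

definition spectral_radius :: "'a hypergraph \<Rightarrow> real" where
  "spectral_radius G = Max {cmod mu | mu. hg_eigenvalue G mu}"

definition hg_iso :: "'a hypergraph \<Rightarrow> 'b hypergraph \<Rightarrow> bool" where
  "hg_iso G H \<longleftrightarrow> (\<exists>f. bij_betw f (fst G) (fst H) \<and> snd H = (\<lambda>e. f ` e) ` snd G)"

text \<open>U*: vertices {0..<n}; v1 = 0, v2 = 1; e1 = {0,1} \<union> {2..<k}, e2 = {0,1} \<union> {k..<2k-2};
  pendant edges {0} \<union> {2k-2+j(k-1) ..< 2k-2+(j+1)(k-1)} for j < n/(k-1) - 2.\<close>
definition Ustar :: "nat \<Rightarrow> nat \<Rightarrow> nat hypergraph" where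
  "Ustar k n = ({0..<n},
     {{0,1} \<union> {2..<k}, {0,1} \<union> {k..<2*k-2}} \<union>
     {insert 0 {2*k-2 + j*(k-1) ..< 2*k-2 + (j+1)*(k-1)} | j. j < n div (k-1) - 2})"

end

theory Submission
  imports Defs "Jordan_Normal_Form.Char_Poly" "HOL-Library.Disjoint_Sets"
begin

lemma sum_nth_conv:
  assumes "distinct vs"
  shows "(\<Sum>j<length vs. f (vs ! j)) = (\<Sum>u\<in>set vs. f u)"
  using sum.reindex_bij_betw[OF bij_betw_nth[OF assms refl refl], of f] by simp

lemma eig_matrix:
  fixes G :: "'a hypergraph"
  assumes "distinct vs" "set vs = fst G"
  defines "M \<equiv> mat (length vs) (length vs) (\<lambda>(i,j). complex_of_real (adj G (vs!i) (vs!j)))"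
  shows "hg_eigenvalue G mu \<longleftrightarrow> eigenvalue M mu"
proof
  let ?n = "length vs"
  have M: "M \<in> carrier_mat ?n ?n" unfolding M_def by simp
  assume "hg_eigenvalue G mu"
  then obtain x where x0: "\<exists>v\<in>fst G. x v \<noteq> 0"
    and xe: "\<forall>i\<in>fst G. (\<Sum>j\<in>fst G. complex_of_real (adj G i j) * x j) = mu * x i"
    unfolding hg_eigenvalue_def by blast
  define v where "v = vec ?n (\<lambda>j. x (vs ! j))"
  have vc: "v \<in> carrier_vec ?n" unfolding v_def by simp
  have vnz: "v \<noteq> 0\<^sub>v ?n"
  proof
    assume h: "v = 0\<^sub>v ?n"
    from x0 obtain u where u: "u \<in> fst G" "x u \<noteq> 0" by blast
    then obtain j where j: "j < ?n" "vs ! j = u" using assms(2) by (metis in_set_conv_nth)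
    have "v $ j = 0" using h j by simp
    then show False using u j unfolding v_def by simp
  qed
  have "M *\<^sub>v v = mu \<cdot>\<^sub>v v"
  proof (rule eq_vecI)
    fix i assume i: "i < dim_vec (mu \<cdot>\<^sub>v v)"
    then have i': "i < ?n" unfolding v_def by simp
    have "(M *\<^sub>v v) $ i = (\<Sum>j<?n. complex_of_real (adj G (vs!i) (vs!j)) * x (vs ! j))"
      using i' unfolding M_def v_def by (simp add: scalar_prod_def row_def atLeast0LessThan)
    also have "\<dots> = (\<Sum>u\<in>fst G. complex_of_real (adj G (vs!i) u) * x u)"
      using sum_nth_conv[OF assms(1), of "\<lambda>u. complex_of_real (adj G (vs!i) u) * x u"] assms(2) by simp
    also have "\<dots> = mu * x (vs ! i)" using xe assms(2) i' by (metis nth_mem)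
    finally show "(M *\<^sub>v v) $ i = (mu \<cdot>\<^sub>v v) $ i" using i' unfolding v_def by simp
  qed (simp add: M_def v_def)
  then show "eigenvalue M mu" unfolding eigenvalue_def eigenvector_def
    using vc vnz M by auto
next
  let ?n = "length vs"
  assume "eigenvalue M mu"
  then obtain v where vc: "v \<in> carrier_vec ?n" and vnz: "v \<noteq> 0\<^sub>v ?n" and ev: "M *\<^sub>v v = mu \<cdot>\<^sub>v v"
    unfolding eigenvalue_def eigenvector_def M_def by auto
  define x where "x u = v $ (the_inv_into {..<?n} ((!) vs) u)" for u :: 'a
  have xv: "x (vs ! j) = v $ j" if "j < ?n" for j
    using that the_inv_into_f_f[OF bij_betw_imp_inj_on[OF bij_betw_nth[OF assms(1) refl refl]]] unfolding x_def by simp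
  have x0: "\<exists>u\<in>fst G. x u \<noteq> 0"
  proof (rule ccontr)
    assume "\<not> ?thesis"
    then have "\<forall>j<?n. v $ j = 0" using xv assms(2) by (metis nth_mem)
    then have "v = 0\<^sub>v ?n" using vc by (intro eq_vecI) auto
    then show False using vnz by simp
  qed
  have "\<forall>i\<in>fst G. (\<Sum>j\<in>fst G. complex_of_real (adj G i j) * x j) = mu * x i"
  proof
    fix u assume u: "u \<in> fst G"
    then obtain i where i: "i < ?n" "vs ! i = u" using assms(2) by (metis in_set_conv_nth)
    have "(\<Sum>j\<in>fst G. complex_of_real (adj G u j) * x j) = (\<Sum>j<?n. complex_of_real (adj G (vs!i) (vs!j)) * x (vs ! j))"
      using sum_nth_conv[OF assms(1), of "\<lambda>w. complex_of_real (adj G (vs!i) w) * x w"] assms(2) i by simp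
    also have "\<dots> = (\<Sum>j<?n. complex_of_real (adj G (vs!i) (vs!j)) * v $ j)"
      by (rule sum.cong) (auto simp: xv)
    also have "\<dots> = (M *\<^sub>v v) $ i"
      using i vc unfolding M_def by (simp add: scalar_prod_def row_def atLeast0LessThan)
    also have "\<dots> = mu * x u" using ev i xv vc by auto
    finally show "(\<Sum>j\<in>fst G. complex_of_real (adj G u j) * x j) = mu * x u" .
  qed
  then show "hg_eigenvalue G mu" unfolding hg_eigenvalue_def using x0 by blast
qed

lemma eig_fin_ne:
  fixes G :: "'a hypergraph"
  assumes "finite (fst G)" "fst G \<noteq> {}"
  shows "finite {mu. hg_eigenvalue G mu}" "{mu. hg_eigenvalue G mu} \<noteq> {}"
proof -
  obtain vs where vs: "distinct vs" "set vs = fst G" using finite_distinct_list[OF assms(1)] by metis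
  define M where "M \<equiv> mat (length vs) (length vs) (\<lambda>(i,j). complex_of_real (adj G (vs!i) (vs!j)))"
  have M: "M \<in> carrier_mat (length vs) (length vs)" unfolding M_def by simp
  have eq: "{mu. hg_eigenvalue G mu} = {mu. poly (char_poly M) mu = 0}"
    using eig_matrix[OF vs] eigenvalue_root_char_poly[OF M] unfolding M_def by auto
  have dm: "degree (char_poly M) = length vs" "coeff (char_poly M) (length vs) = 1"
    using degree_monic_char_poly[OF M] by auto
  have "char_poly M \<noteq> 0" using dm(2) by auto
  then show "finite {mu. hg_eigenvalue G mu}" unfolding eq by (rule poly_roots_finite)
  have "length vs > 0" using vs assms(2) by auto
  then have "\<not> constant (poly (char_poly M))" using dm(1) by (simp add: constant_degree)
  then show "{mu. hg_eigenvalue G mu} \<noteq> {}" unfolding eq using fundamental_theorem_of_algebra by auto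
qed


definition QF :: "'a hypergraph \<Rightarrow> ('a \<Rightarrow> real) \<Rightarrow> real" where
  "QF G w = (\<Sum>i\<in>fst G. \<Sum>j\<in>fst G. adj G i j * w i * w j)"

definition pp :: "'a set \<Rightarrow> ('a \<Rightarrow> real) \<Rightarrow> real" where
  "pp e w = (sum w e)^2 - (\<Sum>i\<in>e. (w i)^2)"

lemma adj_sym: "adj G i j = adj G j i"
  unfolding adj_def by (auto intro!: sum.cong)

lemma hg_finite_edges: "hypergraph G \<Longrightarrow> finite (snd G)"
  unfolding hypergraph_def by (meson Pow_iff finite_Pow_iff finite_subset subsetI)

lemma hg_finite_edge: "hypergraph G \<Longrightarrow> e \<in> snd G \<Longrightarrow> finite e"
  unfolding hypergraph_def by (meson finite_subset)

lemma adj_nonneg: "hypergraph G \<Longrightarrow> adj G i j \<ge> 0"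
  unfolding adj_def hypergraph_def
  by (auto intro!: sum_nonneg simp: of_nat_diff)

lemma adj_pos:
  assumes "hypergraph G" "e \<in> snd G" "i \<in> e" "j \<in> e" "i \<noteq> j"
  shows "adj G i j > 0"
proof -
  have fin: "finite {e\<in>snd G. i \<in> e \<and> j \<in> e}" using hg_finite_edges[OF assms(1)] by simp
  have "\<forall>e\<in>snd G. card e \<ge> 2" using assms(1) unfolding hypergraph_def by auto
  then have pos: "\<forall>e\<in>{e\<in>snd G. i \<in> e \<and> j \<in> e}. 1 / (real (card e) - 1) > 0"
    by (auto simp: of_nat_diff)
  have "e \<in> {e\<in>snd G. i \<in> e \<and> j \<in> e}" using assms by auto
  then have "(\<Sum>e\<in>{e\<in>snd G. i \<in> e \<and> j \<in> e}. 1 / (real (card e) - 1)) > 0"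
    using fin pos by (intro sum_pos2[where i=e]) auto
  then show ?thesis unfolding adj_def using assms(5) by simp
qed

lemma Aop_edges:
  fixes x :: "'a \<Rightarrow> real"
  assumes hg: "hypergraph G" and un: "uniform k G"
  shows "(\<Sum>j\<in>fst G. adj G i j * x j) = (1 / (real k - 1)) * (\<Sum>e\<in>{e\<in>snd G. i \<in> e}. \<Sum>j\<in>e-{i}. x j)"
proof -
  let ?V = "fst G" and ?E = "snd G" and ?c = "1 / (real k - 1)"
  have fV: "finite ?V" using hg unfolding hypergraph_def by auto
  have fE: "finite ?E" using hg_finite_edges[OF hg] .
  have sub: "\<And>e. e \<in> ?E \<Longrightarrow> e \<subseteq> ?V" using hg unfolding hypergraph_def by auto
  have ck: "\<And>e. e \<in> ?E \<Longrightarrow> card e = k" using un unfolding uniform_def by auto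
  have "(\<Sum>j\<in>?V. adj G i j * x j) = (\<Sum>j\<in>?V. \<Sum>e\<in>{e\<in>?E. i \<in> e \<and> j \<in> e \<and> j \<noteq> i}. ?c * x j)"
  proof (rule sum.cong)
    fix j assume "j \<in> ?V"
    show "adj G i j * x j = (\<Sum>e\<in>{e\<in>?E. i \<in> e \<and> j \<in> e \<and> j \<noteq> i}. ?c * x j)"
    proof (cases "i = j")
      case True then show ?thesis unfolding adj_def by simp
    next
      case False
      then have "adj G i j = (\<Sum>e\<in>{e\<in>?E. i \<in> e \<and> j \<in> e \<and> j \<noteq> i}. ?c)"
        unfolding adj_def using ck by (auto intro!: sum.cong)
      then show ?thesis by (simp add: sum_distrib_right)
    qed
  qed simp
  also have "\<dots> = (\<Sum>e\<in>?E. \<Sum>j\<in>{j\<in>?V. i \<in> e \<and> j \<in> e \<and> j \<noteq> i}. ?c * x j)"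
    using sum.swap_restrict[OF fV fE, of "\<lambda>j e. ?c * x j" "\<lambda>j e. i \<in> e \<and> j \<in> e \<and> j \<noteq> i"] by simp
  also have "\<dots> = (\<Sum>e\<in>?E. if i \<in> e then ?c * (\<Sum>j\<in>e-{i}. x j) else 0)"
  proof (rule sum.cong)
    fix e assume e: "e \<in> ?E"
    show "(\<Sum>j\<in>{j\<in>?V. i \<in> e \<and> j \<in> e \<and> j \<noteq> i}. ?c * x j) = (if i \<in> e then ?c * (\<Sum>j\<in>e-{i}. x j) else 0)"
    proof (cases "i \<in> e")
      case True
      then have "{j\<in>?V. i \<in> e \<and> j \<in> e \<and> j \<noteq> i} = e - {i}" using sub[OF e] by auto
      then show ?thesis using True by (simp add: sum_distrib_left)
    qed simp
  qed simp
  also have "\<dots> = ?c * (\<Sum>e\<in>{e\<in>?E. i \<in> e}. \<Sum>j\<in>e-{i}. x j)"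
    using fE by (simp add: sum.inter_filter[symmetric] sum_distrib_left)
  finally show ?thesis .
qed

lemma pp_alt:
  assumes "finite e"
  shows "(\<Sum>i\<in>e. \<Sum>j\<in>e-{i}. w i * w j) = pp e w"
proof -
  have "(sum w e)^2 = (\<Sum>i\<in>e. \<Sum>j\<in>e. w i * w j)"
    by (simp add: power2_eq_square sum_product)
  also have "\<dots> = (\<Sum>i\<in>e. (w i)^2 + (\<Sum>j\<in>e-{i}. w i * w j))"
    using assms by (intro sum.cong refl) (simp add: sum.remove power2_eq_square)
  finally show ?thesis unfolding pp_def by (simp add: sum.distrib)
qed

lemma QF_edges:
  assumes hg: "hypergraph G" and un: "uniform k G"
  shows "QF G w = (1 / (real k - 1)) * (\<Sum>e\<in>snd G. pp e w)"
proof -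
  let ?V = "fst G" and ?E = "snd G" and ?c = "1 / (real k - 1)"
  have fV: "finite ?V" using hg unfolding hypergraph_def by auto
  have fE: "finite ?E" using hg_finite_edges[OF hg] .
  have sub: "\<And>e. e \<in> ?E \<Longrightarrow> e \<subseteq> ?V" using hg unfolding hypergraph_def by auto
  have "QF G w = (\<Sum>i\<in>?V. w i * (\<Sum>j\<in>?V. adj G i j * w j))"
    unfolding QF_def by (simp add: sum_distrib_left mult_ac)
  also have "\<dots> = (\<Sum>i\<in>?V. \<Sum>e\<in>{e\<in>?E. i \<in> e}. ?c * (\<Sum>j\<in>e-{i}. w i * w j))"
  proof (rule sum.cong)
    fix i assume "i \<in> ?V"
    have "w i * (\<Sum>j\<in>?V. adj G i j * w j) = w i * (?c * (\<Sum>e\<in>{e\<in>?E. i \<in> e}. \<Sum>j\<in>e-{i}. w j))"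
      by (simp only: Aop_edges[OF hg un])
    also have "\<dots> = (\<Sum>e\<in>{e\<in>?E. i \<in> e}. ?c * (\<Sum>j\<in>e-{i}. w i * w j))"
      by (simp add: sum_distrib_left mult_ac)
    finally show "w i * (\<Sum>j\<in>?V. adj G i j * w j) = (\<Sum>e\<in>{e\<in>?E. i \<in> e}. ?c * (\<Sum>j\<in>e-{i}. w i * w j))" .
  qed simp
  also have "\<dots> = (\<Sum>e\<in>?E. \<Sum>i\<in>{i\<in>?V. i \<in> e}. ?c * (\<Sum>j\<in>e-{i}. w i * w j))"
    using sum.swap_restrict[OF fV fE, of "\<lambda>i e. ?c * (\<Sum>j\<in>e-{i}. w i * w j)" "\<lambda>i e. i \<in> e"] by simp
  also have "\<dots> = (\<Sum>e\<in>?E. ?c * pp e w)"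
  proof (rule sum.cong)
    fix e assume e: "e \<in> ?E"
    have "{i\<in>?V. i \<in> e} = e" using sub[OF e] by auto
    then show "(\<Sum>i\<in>{i\<in>?V. i \<in> e}. ?c * (\<Sum>j\<in>e-{i}. w i * w j)) = ?c * pp e w"
      using pp_alt[OF hg_finite_edge[OF hg e], of w] by (simp add: sum_divide_distrib[symmetric])
  qed simp
  finally show ?thesis by (simp add: sum_distrib_left)
qed

lemma eig_le_QF:
  assumes hg: "hypergraph G"
    and xe: "\<forall>i\<in>fst G. (\<Sum>j\<in>fst G. complex_of_real (adj G i j) * x j) = mu * x i"
  shows "cmod mu * (\<Sum>i\<in>fst G. (cmod (x i))^2) \<le> QF G (\<lambda>i. cmod (x i))"
proof -
  have "cmod mu * (cmod (x i))^2 \<le> (\<Sum>j\<in>fst G. adj G i j * cmod (x i) * cmod (x j))"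
    if i: "i \<in> fst G" for i
  proof -
    have "cmod mu * cmod (x i) = cmod (\<Sum>j\<in>fst G. complex_of_real (adj G i j) * x j)"
      using xe i by (simp add: norm_mult)
    also have "\<dots> \<le> (\<Sum>j\<in>fst G. cmod (complex_of_real (adj G i j) * x j))" by (rule norm_sum)
    also have "\<dots> = (\<Sum>j\<in>fst G. adj G i j * cmod (x j))"
      using adj_nonneg[OF hg] by (simp add: norm_mult)
    finally have "cmod mu * cmod (x i) * cmod (x i) \<le> (\<Sum>j\<in>fst G. adj G i j * cmod (x j)) * cmod (x i)"
      by (simp add: mult_right_mono)
    moreover have "(\<Sum>j\<in>fst G. adj G i j * cmod (x j)) * cmod (x i) = (\<Sum>j\<in>fst G. adj G i j * cmod (x i) * cmod (x j))"
      by (simp add: sum_distrib_left sum_distrib_right mult_ac)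
    ultimately show ?thesis by (simp add: power2_eq_square mult_ac)
  qed
  then have "(\<Sum>i\<in>fst G. cmod mu * (cmod (x i))^2) \<le> (\<Sum>i\<in>fst G. \<Sum>j\<in>fst G. adj G i j * cmod (x i) * cmod (x j))"
    by (rule sum_mono)
  then show ?thesis unfolding QF_def by (simp add: sum_distrib_left)
qed

lemma QF_le:
  assumes hg: "hypergraph G"
    and pp0: "\<forall>i\<in>fst G. p i > 0"
    and pe: "\<forall>i\<in>fst G. (\<Sum>j\<in>fst G. adj G i j * p j) = lam * p i"
  shows "QF G w \<le> lam * (\<Sum>i\<in>fst G. (w i)^2)"
    and "QF G w = lam * (\<Sum>i\<in>fst G. (w i)^2) \<Longrightarrow>
         \<forall>i\<in>fst G. \<forall>j\<in>fst G. adj G i j \<noteq> 0 \<longrightarrow> w i * p j = w j * p i"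
proof -
  let ?V = "fst G"
  define T where "T i j = adj G i j * (w i * p j - w j * p i)^2 / (p i * p j)" for i j
  have T0: "T i j \<ge> 0" if "i \<in> ?V" "j \<in> ?V" for i j
    unfolding T_def using adj_nonneg[OF hg] pp0 that by (intro divide_nonneg_pos mult_nonneg_nonneg) auto
  have Texp: "T i j = adj G i j * p j * (w i)^2 / p i + adj G i j * p i * (w j)^2 / p j - 2 * (adj G i j * w i * w j)"
    if "i \<in> ?V" "j \<in> ?V" for i j
  proof -
    have "p i > 0" "p j > 0" using pp0 that by auto
    then show ?thesis unfolding T_def by (simp add: field_simps power2_eq_square)
  qed
  have S1: "(\<Sum>i\<in>?V. \<Sum>j\<in>?V. adj G i j * p j * (w i)^2 / p i) = lam * (\<Sum>i\<in>?V. (w i)^2)"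
  proof -
    have "(\<Sum>i\<in>?V. \<Sum>j\<in>?V. adj G i j * p j * (w i)^2 / p i) = (\<Sum>i\<in>?V. (w i)^2 / p i * (\<Sum>j\<in>?V. adj G i j * p j))"
      by (simp add: sum_distrib_left sum_divide_distrib mult_ac)
    also have "\<dots> = (\<Sum>i\<in>?V. lam * (w i)^2)" using pe pp0 by (intro sum.cong) auto
    finally show ?thesis by (simp add: sum_distrib_left)
  qed
  have S2: "(\<Sum>i\<in>?V. \<Sum>j\<in>?V. adj G i j * p i * (w j)^2 / p j) = lam * (\<Sum>i\<in>?V. (w i)^2)"
  proof -
    have "(\<Sum>i\<in>?V. \<Sum>j\<in>?V. adj G i j * p i * (w j)^2 / p j) = (\<Sum>j\<in>?V. \<Sum>i\<in>?V. adj G j i * p i * (w j)^2 / p j)"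
      by (subst sum.swap) (simp add: adj_sym)
    also have "\<dots> = lam * (\<Sum>i\<in>?V. (w i)^2)" using S1 by simp
    finally show ?thesis .
  qed
  have D: "(\<Sum>i\<in>?V. \<Sum>j\<in>?V. T i j) = 2 * (lam * (\<Sum>i\<in>?V. (w i)^2) - QF G w)"
  proof -
    have "(\<Sum>i\<in>?V. \<Sum>j\<in>?V. T i j) = (\<Sum>i\<in>?V. \<Sum>j\<in>?V. adj G i j * p j * (w i)^2 / p i + adj G i j * p i * (w j)^2 / p j - 2 * (adj G i j * w i * w j))"
      by (intro sum.cong refl) (simp add: Texp)
    also have "\<dots> = (\<Sum>i\<in>?V. \<Sum>j\<in>?V. adj G i j * p j * (w i)^2 / p i) + (\<Sum>i\<in>?V. \<Sum>j\<in>?V. adj G i j * p i * (w j)^2 / p j) - 2 * QF G w"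
      unfolding QF_def by (simp add: sum.distrib sum_subtractf sum_distrib_left)
    finally show ?thesis using S1 S2 by simp
  qed
  have "(\<Sum>i\<in>?V. \<Sum>j\<in>?V. T i j) \<ge> 0" using T0 by (intro sum_nonneg) auto
  then show "QF G w \<le> lam * (\<Sum>i\<in>?V. (w i)^2)" using D by simp
  assume eq: "QF G w = lam * (\<Sum>i\<in>?V. (w i)^2)"
  have fV: "finite ?V" using hg unfolding hypergraph_def by auto
  have "(\<Sum>i\<in>?V. \<Sum>j\<in>?V. T i j) = 0" using D eq by simp
  then have "\<forall>i\<in>?V. (\<Sum>j\<in>?V. T i j) = 0"
    using fV T0 by (subst sum_nonneg_eq_0_iff[symmetric]) (auto intro!: sum_nonneg)
  then have Tz: "\<forall>i\<in>?V. \<forall>j\<in>?V. T i j = 0"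
    using fV T0 by (auto simp: sum_nonneg_eq_0_iff)
  show "\<forall>i\<in>?V. \<forall>j\<in>?V. adj G i j \<noteq> 0 \<longrightarrow> w i * p j = w j * p i"
  proof (intro ballI impI)
    fix i j assume ij: "i \<in> ?V" "j \<in> ?V" "adj G i j \<noteq> 0"
    have "p i * p j \<noteq> 0" using pp0 ij by auto
    then have "(w i * p j - w j * p i)^2 = 0" using Tz ij unfolding T_def by auto
    then show "w i * p j = w j * p i" by simp
  qed
qed


definition zz :: "real \<Rightarrow> real \<Rightarrow> real" where "zz K th = 1 / (th - K + 1)"
definition aa :: "real \<Rightarrow> real \<Rightarrow> real" where "aa K th = 2 * (th + 1) / (th * (th - K + 2) - 2 * (K - 1))"
definition bb :: "real \<Rightarrow> real \<Rightarrow> real" where "bb K th = (1 + aa K th) / (th - K + 2)"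
definition ff :: "real \<Rightarrow> real \<Rightarrow> real \<Rightarrow> real" where
  "ff K t th = 2 * aa K th + 2 * (K - 1) * bb K th + t * K * zz K th - th"

lemma den_pos: "(K::real) \<ge> 2 \<Longrightarrow> th \<ge> K \<Longrightarrow> th * (th - K + 2) - 2 * (K - 1) > 0"
proof -
  assume "K \<ge> 2" "th \<ge> K"
  then have "th * (th - K + 2) \<ge> K * 2" by (intro mult_mono) auto
  then show ?thesis by (simp add: algebra_simps)
qed

lemma ff_K: "K \<ge> 2 \<Longrightarrow> t \<ge> 0 \<Longrightarrow> ff K t K > 0"
proof -
  assume K: "K \<ge> 2" and t: "t \<ge> 0"
  have a: "aa K K = K + 1" unfolding aa_def by (simp add: algebra_simps)
  have b: "bb K K = (K + 2) / 2" unfolding bb_def a by simp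
  have z: "zz K K = 1" unfolding zz_def by simp
  define X where X: "X = 2 * (K - 1) * ((K + 2) / 2)"
  define Y where Y: "Y = t * K * 1"
  have "X \<ge> 0" unfolding X using K by simp
  moreover have "Y \<ge> 0" unfolding Y using K t by simp
  moreover have "ff K t K = 2 * (K + 1) + X + Y - K"
    unfolding ff_def a b z X Y by simp
  ultimately show ?thesis using K by simp
qed

lemma ff_M:
  assumes K: "K \<ge> 2" and t: "t \<ge> 0"
  shows "ff K t (2 * K + t + 4) < 0"
proof -
  define th where "th = 2 * K + t + 4"
  define s where "s = th - K + 2"
  have s: "s = K + t + 6" unfolding s_def th_def by simp
  have s8: "s \<ge> 8" using s K t by simp
  have D: "th * (th - K + 2) - 2 * (K - 1) \<ge> th * s / 2"
  proof -
    have "(K - 1) * 8 \<le> th * s" using s8 K t unfolding th_def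
      by (intro mult_mono) auto
    then show ?thesis unfolding s_def using K by simp
  qed
  have thpos: "th > 0" unfolding th_def using K t by simp
  have a1: "aa K th \<le> 8 / s"
  proof -
    have "aa K th \<le> 2 * (th + 1) / (th * s / 2)"
    proof -
      have tsp: "th * s / 2 > 0" using thpos s8 by simp
      then have "th * (th - K + 2) - 2 * (K - 1) > 0" using D by linarith
      then show ?thesis unfolding aa_def using D thpos tsp by (intro divide_left_mono mult_pos_pos) auto
    qed
    also have "\<dots> = 4 * (th + 1) / (th * s)" by simp
    also have "\<dots> \<le> 8 * th / (th * s)" using thpos s8 K t unfolding th_def by (intro divide_right_mono) auto
    also have "\<dots> = 8 / s" using thpos by simp
    finally show ?thesis .
  qed
  have a0: "aa K th \<ge> 0"
  proof -
    have "th \<ge> K" unfolding th_def using K t by simp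
    then have "th * (th - K + 2) - 2 * (K - 1) > 0" by (rule den_pos[OF K])
    then show ?thesis unfolding aa_def using thpos by simp
  qed
  have a1': "aa K th \<le> 1" using a1 s8 by (smt (verit) divide_le_eq_1_pos)
  have b1: "bb K th \<le> 2 / s" unfolding bb_def s_def[symmetric] using a1' s8 by (intro divide_right_mono) auto
  have z1: "zz K th = 1 / (s - 1)" unfolding zz_def s_def by simp
  have "2 * aa K th \<le> 2" using a1' by simp
  moreover have "2 * (K - 1) * bb K th < 4"
  proof -
    have "2 * (K - 1) * bb K th \<le> 2 * (K - 1) * (2 / s)" using b1 K by (intro mult_left_mono) auto
    also have "\<dots> < 4" using s K t s8 by (simp add: field_simps)
    finally show ?thesis .
  qed
  moreover have "t * K * zz K th \<le> K"
  proof -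
    have "t * K * zz K th = t * K / (s - 1)" using z1 by simp
    also have "\<dots> \<le> K" using s K t s8 by (simp add: field_simps)
    finally show ?thesis .
  qed
  ultimately show ?thesis unfolding ff_def th_def[symmetric] using K t unfolding th_def by linarith
qed

lemma ff_cont: "K \<ge> 2 \<Longrightarrow> continuous_on {K..M} (ff K t)"
  unfolding ff_def aa_def bb_def zz_def
  by (intro continuous_intros) (auto dest: den_pos[of K] simp: algebra_simps)

definition thst :: "real \<Rightarrow> real \<Rightarrow> real" where
  "thst K t = (SOME th. th > K \<and> ff K t th = 0)"

lemma th_ex: assumes "K \<ge> 2" "t \<ge> 0" shows "\<exists>th. th > K \<and> ff K t th = 0"
proof -
  have "\<exists>x\<ge>K. x \<le> 2 * K + t + 4 \<and> ff K t x = 0"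
    using ff_M[OF assms] ff_K[OF assms] assms ff_cont[OF assms(1)]
    by (intro IVT2') auto
  then obtain x where "x \<ge> K" "ff K t x = 0" by auto
  moreover have "x \<noteq> K" using ff_K[OF assms] \<open>ff K t x = 0\<close> by auto
  ultimately show ?thesis by (intro exI[of _ x]) auto
qed

lemma th_prop:
  assumes "K \<ge> 2" "t \<ge> 0"
  defines "th \<equiv> thst K t"
  shows "th > K" "ff K t th = 0"
  using someI_ex[OF th_ex[OF assms(1,2)]] unfolding th_def thst_def by auto

lemma th_eqs:
  assumes K: "K \<ge> 2" and t: "t \<ge> 0"
  defines "th \<equiv> thst K t"
  defines "a \<equiv> aa K th" and "b \<equiv> bb K th" and "z \<equiv> zz K th"
  shows "th = 2 * a + 2 * (K - 1) * b + t * K * z"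
    and "th * a = 2 * (1 + (K - 1) * b)"
    and "th * b = 1 + a + (K - 2) * b"
    and "th * z = 1 + (K - 1) * z"
    and "a > 0" "b > 0" "z > 0" "th > 0"
    and "b < 1" "z < 1" "a \<le> 1" "t > 0 \<Longrightarrow> a < 1"
proof -
  have thK: "th > K" and f0: "ff K t th = 0" using th_prop[OF K t] unfolding th_def by auto
  have D: "th * (th - K + 2) - 2 * (K - 1) > 0" using den_pos[OF K] thK by simp
  show "th = 2 * a + 2 * (K - 1) * b + t * K * z" using f0 unfolding ff_def a_def b_def z_def by simp
  have s: "th - K + 2 > 0" "th - K + 1 > 0" using thK by auto
  have aD: "a * (th * (th - K + 2) - 2 * (K - 1)) = 2 * (th + 1)"
    unfolding a_def aa_def using D by simp
  have bs0: "bb K th * (th - K + 2) = 1 + aa K th" unfolding bb_def using s by simp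
  have bs: "b * (th - K + 2) = 1 + a" using bs0 unfolding a_def b_def .
  have "th * a * (th - K + 2) = 2 * (1 + (K - 1) * b) * (th - K + 2)"
  proof -
    have "th * a * (th - K + 2) = a * (th * (th - K + 2) - 2 * (K - 1)) + 2 * (K - 1) * a"
      by (simp add: algebra_simps)
    also have "\<dots> = 2 * (th + 1) + 2 * (K - 1) * a" using aD by simp
    also have "\<dots> = 2 * (th - K + 2) + 2 * (K - 1) * (1 + a)" by (simp add: algebra_simps)
    also have "\<dots> = 2 * (th - K + 2) + 2 * (K - 1) * (b * (th - K + 2))" using bs by simp
    also have "\<dots> = 2 * (1 + (K - 1) * b) * (th - K + 2)" by (simp add: algebra_simps)
    finally show ?thesis .
  qed
  then show ea: "th * a = 2 * (1 + (K - 1) * b)" using s by simp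
  show "th * b = 1 + a + (K - 2) * b"
  proof -
    have "th * b = b * (th - K + 2) + (K - 2) * b" by (simp add: algebra_simps)
    then show ?thesis using bs by simp
  qed
  show "th * z = 1 + (K - 1) * z" unfolding z_def zz_def using s by (simp add: field_simps)
  show a0: "a > 0" unfolding a_def aa_def using D thK K by simp
  show b0: "b > 0" unfolding b_def bb_def using a0 s unfolding a_def by simp
  show z0: "z > 0" unfolding z_def zz_def using s by simp
  show "th > 0" using thK K by simp
  show "z < 1" unfolding z_def zz_def using thK s by simp
  have key: "(th + 2) * (1 - a) = t * K * z"
    using \<open>th = 2 * a + 2 * (K - 1) * b + t * K * z\<close> ea by (simp add: algebra_simps)
  have tz: "t * K * z \<ge> 0" using t K z0 by simp
  have th2: "th + 2 > 0" using thK K by simp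
  have oma: "1 - a = t * K * z / (th + 2)" using key th2 by (simp add: eq_divide_eq mult.commute)
  have "t * K * z / (th + 2) \<ge> 0" using tz th2 by simp
  then show a1: "a \<le> 1" using oma by linarith
  show "t > 0 \<Longrightarrow> a < 1"
  proof -
    assume "t > 0"
    then have "t * K * z > 0" using K z0 by simp
    then have "t * K * z / (th + 2) > 0" using th2 by simp
    then show "a < 1" using oma by linarith
  qed
  have "b * 2 < b * (th - K + 2)" using b0 thK by (intro mult_strict_left_mono) auto
  then show "b < 1" using bs a1 by linarith
qed


lemma eigset_eq: "{cmod mu | mu. hg_eigenvalue G mu} = cmod ` {mu. hg_eigenvalue G mu}" by auto

lemma sr_facts:
  assumes "hypergraph G"
  shows "finite {cmod mu | mu. hg_eigenvalue G mu}" "{cmod mu | mu. hg_eigenvalue G mu} \<noteq> {}"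
  using eig_fin_ne[of G] assms unfolding hypergraph_def eigset_eq by auto

lemma sr_le:
  assumes "hypergraph G" "\<And>mu. hg_eigenvalue G mu \<Longrightarrow> cmod mu \<le> L"
  shows "spectral_radius G \<le> L"
  unfolding spectral_radius_def using sr_facts[OF assms(1)] assms(2)
  by (subst Max_le_iff) auto

lemma sr_ge:
  assumes "hypergraph G" "hg_eigenvalue G mu"
  shows "cmod mu \<le> spectral_radius G"
  unfolding spectral_radius_def using sr_facts[OF assms(1)] assms(2)
  by (intro Max_ge) auto

lemma sr_in:
  assumes "hypergraph G"
  shows "\<exists>mu. hg_eigenvalue G mu \<and> cmod mu = spectral_radius G"
proof -
  have "spectral_radius G \<in> {cmod mu | mu. hg_eigenvalue G mu}"
    unfolding spectral_radius_def using sr_facts[OF assms] by (rule Max_in)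
  then show ?thesis by auto
qed

lemma eig_bound_pos:
  assumes hg: "hypergraph G"
    and pp0: "\<forall>i\<in>fst G. p i > 0"
    and pe: "\<forall>i\<in>fst G. (\<Sum>j\<in>fst G. adj G i j * p j) = lam * p i"
    and ev: "hg_eigenvalue G mu"
  shows "cmod mu \<le> lam"
proof -
  obtain x where x0: "\<exists>v\<in>fst G. x v \<noteq> 0"
    and xe: "\<forall>i\<in>fst G. (\<Sum>j\<in>fst G. complex_of_real (adj G i j) * x j) = mu * x i"
    using ev unfolding hg_eigenvalue_def by blast
  let ?w = "\<lambda>i. cmod (x i)"
  have fV: "finite (fst G)" using hg unfolding hypergraph_def by auto
  have S: "(\<Sum>i\<in>fst G. (?w i)^2) > 0"
  proof -
    from x0 obtain v where v: "v \<in> fst G" "x v \<noteq> 0" by blast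
    then show ?thesis using fV by (intro sum_pos2[where i=v]) auto
  qed
  have "cmod mu * (\<Sum>i\<in>fst G. (?w i)^2) \<le> lam * (\<Sum>i\<in>fst G. (?w i)^2)"
    using eig_le_QF[OF hg xe] QF_le(1)[OF hg pp0 pe, of ?w] by linarith
  then show ?thesis using S by simp
qed

lemma sr_eq:
  assumes hg: "hypergraph G"
    and pp0: "\<forall>i\<in>fst G. p i > 0"
    and pe: "\<forall>i\<in>fst G. (\<Sum>j\<in>fst G. adj G i j * p j) = lam * p i"
  shows "spectral_radius G = lam" "hg_eigenvalue G (complex_of_real lam)"
proof -
  have ne: "fst G \<noteq> {}" using hg unfolding hypergraph_def by auto
  show ev: "hg_eigenvalue G (complex_of_real lam)"
    unfolding hg_eigenvalue_def
  proof (intro exI[of _ "\<lambda>i. complex_of_real (p i)"] conjI ballI)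
    show "\<exists>v\<in>fst G. complex_of_real (p v) \<noteq> 0" using ne pp0 by fastforce
    fix i assume i: "i \<in> fst G"
    have "(\<Sum>j\<in>fst G. complex_of_real (adj G i j) * complex_of_real (p j)) = complex_of_real (\<Sum>j\<in>fst G. adj G i j * p j)"
      by simp
    also have "\<dots> = complex_of_real lam * complex_of_real (p i)" using pe i by simp
    finally show "(\<Sum>j\<in>fst G. complex_of_real (adj G i j) * complex_of_real (p j)) = complex_of_real lam * complex_of_real (p i)" .
  qed
  obtain i where i: "i \<in> fst G" using ne by auto
  have "lam * p i \<ge> 0" using pe i adj_nonneg[OF hg] pp0 by (metis (no_types, lifting) less_imp_le mult_nonneg_nonneg sum_nonneg)
  then have l0: "lam \<ge> 0"
  proof (rule contrapos_pp)
    assume "\<not> lam \<ge> 0"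
    then have "lam < 0" by simp
    moreover have "p i > 0" using pp0 i by simp
    ultimately show "\<not> lam * p i \<ge> 0" by (simp add: mult_neg_pos not_le)
  qed
  have "spectral_radius G \<le> lam" using sr_le[OF hg] eig_bound_pos[OF hg pp0 pe] by blast
  moreover have "lam \<le> spectral_radius G" using sr_ge[OF hg ev] l0 by simp
  ultimately show "spectral_radius G = lam" by simp
qed

lemma iso_adj:
  assumes hgG: "hypergraph G" and f: "bij_betw f (fst G) (fst H)" and E: "snd H = (\<lambda>e. f ` e) ` snd G"
    and i: "i \<in> fst G" and j: "j \<in> fst G"
  shows "adj H (f i) (f j) = adj G i j"
proof -
  have inj: "inj_on f (fst G)" using f by (rule bij_betw_imp_inj_on)
  have sub: "\<And>e. e \<in> snd G \<Longrightarrow> e \<subseteq> fst G" using hgG unfolding hypergraph_def by auto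
  have injE: "inj_on (\<lambda>e. f ` e) (snd G)"
    by (rule inj_onI) (metis inj inj_on_image_eq_iff sub)
  have eqs: "{e'\<in>snd H. f i \<in> e' \<and> f j \<in> e'} = (\<lambda>e. f ` e) ` {e\<in>snd G. i \<in> e \<and> j \<in> e}"
  proof -
    have "\<And>e. e \<in> snd G \<Longrightarrow> (f i \<in> f ` e \<longleftrightarrow> i \<in> e) \<and> (f j \<in> f ` e \<longleftrightarrow> j \<in> e)"
      using inj i j sub by (meson inj_on_image_mem_iff)
    then show ?thesis unfolding E by auto
  qed
  have injE': "inj_on (\<lambda>e. f ` e) {e\<in>snd G. i \<in> e \<and> j \<in> e}" using injE by (rule inj_on_subset) auto
  have ij: "(f i = f j) \<longleftrightarrow> (i = j)" using inj i j by (meson inj_on_eq_iff)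
  have cd: "\<And>e. e \<in> snd G \<Longrightarrow> card (f ` e) = card e" using inj sub by (meson card_image inj_on_subset)
  show ?thesis unfolding adj_def eqs ij
    using sum.reindex[OF injE', of "\<lambda>e. 1 / (real (card e) - 1)"] cd by (auto intro!: sum.cong)
qed

lemma iso_eig:
  assumes hgG: "hypergraph G" and iso: "hg_iso G H" and ev: "hg_eigenvalue H mu"
  shows "hg_eigenvalue G mu"
proof -
  obtain f where f: "bij_betw f (fst G) (fst H)" and E: "snd H = (\<lambda>e. f ` e) ` snd G"
    using iso unfolding hg_iso_def by blast
  obtain y where y0: "\<exists>v\<in>fst H. y v \<noteq> 0"
    and ye: "\<forall>i\<in>fst H. (\<Sum>j\<in>fst H. complex_of_real (adj H i j) * y j) = mu * y i"
    using ev unfolding hg_eigenvalue_def by blast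
  show ?thesis unfolding hg_eigenvalue_def
  proof (intro exI[of _ "\<lambda>i. y (f i)"] conjI ballI)
    show "\<exists>v\<in>fst G. y (f v) \<noteq> 0" using y0 f by (metis bij_betw_imp_surj_on imageE)
    fix i assume i: "i \<in> fst G"
    have "(\<Sum>j\<in>fst G. complex_of_real (adj G i j) * y (f j)) = (\<Sum>j\<in>fst G. complex_of_real (adj H (f i) (f j)) * y (f j))"
      using iso_adj[OF hgG f E i] by simp
    also have "\<dots> = (\<Sum>u\<in>fst H. complex_of_real (adj H (f i) u) * y u)"
      using sum.reindex_bij_betw[OF f, of "\<lambda>u. complex_of_real (adj H (f i) u) * y u"] by simp
    also have "\<dots> = mu * y (f i)" using ye f i by (meson bij_betwE)
    finally show "(\<Sum>j\<in>fst G. complex_of_real (adj G i j) * y (f j)) = mu * y (f i)" .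
  qed
qed


definition shape :: "'a \<Rightarrow> 'a \<Rightarrow> 'a set \<Rightarrow> 'a set \<Rightarrow> 'a set set \<Rightarrow> 'a hypergraph" where
  "shape r v I1 I2 P = (insert r (insert v (I1 \<union> I2 \<union> \<Union>P)),
     {insert r (insert v I1), insert r (insert v I2)} \<union> (insert r) ` P)"

definition shape_ok :: "nat \<Rightarrow> 'a \<Rightarrow> 'a \<Rightarrow> 'a set \<Rightarrow> 'a set \<Rightarrow> 'a set set \<Rightarrow> bool" where
  "shape_ok k r v I1 I2 P \<longleftrightarrow> r \<noteq> v \<and> finite I1 \<and> finite I2 \<and> finite P \<and>
     card I1 = k - 2 \<and> card I2 = k - 2 \<and> I1 \<inter> I2 = {} \<and>
     r \<notin> I1 \<union> I2 \<union> \<Union>P \<and> v \<notin> I1 \<union> I2 \<union> \<Union>P \<and> (I1 \<union> I2) \<inter> \<Union>P = {} \<and>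
     (\<forall>B\<in>P. finite B \<and> card B = k - 1) \<and> (\<forall>B\<in>P. \<forall>B'\<in>P. B \<noteq> B' \<longrightarrow> B \<inter> B' = {})"

definition lamk :: "nat \<Rightarrow> nat \<Rightarrow> real" where
  "lamk k t = thst (real k - 1) (real t) / (real k - 1)"

definition pvec :: "nat \<Rightarrow> nat \<Rightarrow> 'a \<Rightarrow> 'a \<Rightarrow> 'a set \<Rightarrow> 'a set \<Rightarrow> 'a \<Rightarrow> real" where
  "pvec k t r v I1 I2 x = (let K = real k - 1; th = thst K (real t) in
     if x = r then 1 else if x = v then aa K th else if x \<in> I1 \<union> I2 then bb K th else zz K th)"

lemma shape_hg:
  assumes k: "k \<ge> 3" and ok: "shape_ok k r v I1 I2 P"
  shows "hypergraph (shape r v I1 I2 P)" "uniform k (shape r v I1 I2 P)"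
proof -
  have c1: "card (insert r (insert v I1)) = k" and c2: "card (insert r (insert v I2)) = k"
    using ok k unfolding shape_ok_def by auto
  have cB: "\<And>B. B \<in> P \<Longrightarrow> card (insert r B) = k" using ok k unfolding shape_ok_def by auto
  have fin: "finite (insert r (insert v (I1 \<union> I2 \<union> \<Union>P)))"
    using ok unfolding shape_ok_def by auto
  show "hypergraph (shape r v I1 I2 P)" unfolding hypergraph_def shape_def
    using fin c1 c2 cB k by auto
  show "uniform k (shape r v I1 I2 P)" unfolding uniform_def shape_def using c1 c2 cB by auto
qed

lemma sum_const_on:
  assumes "\<And>x. x \<in> A \<Longrightarrow> f x = c"
  shows "sum f A = real (card A) * c"
  using assms by simp

lemma shape_eig:
  assumes k: "k \<ge> 3" and ok: "shape_ok k r v I1 I2 P"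
  defines "p \<equiv> pvec k (card P) r v I1 I2"
  shows "\<forall>i\<in>fst (shape r v I1 I2 P). p i > 0"
    and "\<forall>i\<in>fst (shape r v I1 I2 P). (\<Sum>j\<in>fst (shape r v I1 I2 P). adj (shape r v I1 I2 P) i j * p j) = lamk k (card P) * p i"
proof -
  define K where "K = real k - 1"
  define t where "t = real (card P)"
  define th where "th = thst K t"
  define a where "a = aa K th"
  define b where "b = bb K th"
  define z where "z = zz K th"
  have K2: "K \<ge> 2" unfolding K_def using k by simp
  have t0: "t \<ge> 0" unfolding t_def by simp
  note eqs = th_eqs[OF K2 t0, folded th_def, folded a_def b_def z_def]
  have pr: "p r = 1" unfolding p_def pvec_def by simp
  have pv: "p v = a" using ok unfolding p_def pvec_def shape_ok_def Let_def a_def th_def K_def t_def by auto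
  have pI: "\<And>x. x \<in> I1 \<union> I2 \<Longrightarrow> p x = b" using ok unfolding p_def pvec_def shape_ok_def Let_def b_def th_def K_def t_def by auto
  have pP: "\<And>x. x \<in> \<Union>P \<Longrightarrow> p x = z" using ok unfolding p_def pvec_def shape_ok_def Let_def z_def th_def K_def t_def by auto
  let ?V = "insert r (insert v (I1 \<union> I2 \<union> \<Union>P))"
  have Vs: "fst (shape r v I1 I2 P) = ?V" unfolding shape_def by simp
  show "\<forall>i\<in>fst (shape r v I1 I2 P). p i > 0"
    unfolding Vs using pr pv pI pP eqs by auto
  have okf: "r \<noteq> v" "finite I1" "finite I2" "finite P" "card I1 = k - 2" "card I2 = k - 2" "I1 \<inter> I2 = {}"
    "r \<notin> I1 \<union> I2 \<union> \<Union>P" "v \<notin> I1 \<union> I2 \<union> \<Union>P" "(I1 \<union> I2) \<inter> \<Union>P = {}"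
    "\<forall>B\<in>P. finite B \<and> card B = k - 1" "\<forall>B\<in>P. \<forall>B'\<in>P. B \<noteq> B' \<longrightarrow> B \<inter> B' = {}"
    using ok unfolding shape_ok_def by auto
  have rk2: "real (k - 2) = K - 1" "real (k - 1) = K" "real (k - 3) = K - 2" unfolding K_def using k by auto
  define C1 where "C1 = insert r (insert v I1)"
  define C2 where "C2 = insert r (insert v I2)"
  have Es: "snd (shape r v I1 I2 P) = {C1, C2} \<union> (insert r) ` P" unfolding shape_def C1_def C2_def by simp
  have sI1: "sum p I1 = (K - 1) * b" using pI okf(5) rk2 by (simp add: sum_const_on[of I1 p b])
  have sI2: "sum p I2 = (K - 1) * b" using pI okf(6) rk2 by (simp add: sum_const_on[of I2 p b])
  have sB: "\<And>B. B \<in> P \<Longrightarrow> sum p B = K * z"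
  proof -
    fix B assume B: "B \<in> P"
    have "\<And>x. x \<in> B \<Longrightarrow> p x = z" using pP B by auto
    then show "sum p B = K * z" using okf(11) B rk2 by (simp add: sum_const_on[of B p z])
  qed
  have sBi: "\<And>B i. B \<in> P \<Longrightarrow> i \<in> B \<Longrightarrow> sum p (B - {i}) = (K - 1) * z"
  proof -
    fix B i assume B: "B \<in> P" and i: "i \<in> B"
    have "\<And>x. x \<in> B - {i} \<Longrightarrow> p x = z" using pP B by auto
    moreover have "card (B - {i}) = k - 2" using okf(11) B i by (simp add: card_Diff_singleton)
    ultimately show "sum p (B - {i}) = (K - 1) * z" using rk2 by (simp add: sum_const_on[of "B - {i}" p z])
  qed
  have sIi: "\<And>I i. I \<in> {I1, I2} \<Longrightarrow> i \<in> I \<Longrightarrow> sum p (I - {i}) = (K - 2) * b"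
  proof -
    fix I i assume I: "I \<in> {I1, I2}" and i: "i \<in> I"
    have "\<And>x. x \<in> I - {i} \<Longrightarrow> p x = b" using pI I by auto
    moreover have "card (I - {i}) = k - 3" using okf(5,6,2,3) I i by (auto simp: card_Diff_singleton)
    ultimately show "sum p (I - {i}) = (K - 2) * b" using rk2 by (simp add: sum_const_on[of "I - {i}" p b])
  qed
  define sig where "sig i = (\<Sum>e\<in>{e\<in>snd (shape r v I1 I2 P). i \<in> e}. \<Sum>j\<in>e-{i}. p j)" for i
  have sig_th: "sig i = th * p i" if i: "i \<in> ?V" for i
  proof -
    have injP: "inj_on (insert r) P" using okf(8) by (intro inj_onI) (metis UnionI UnCI insert_ident)
    have C1P: "C1 \<notin> insert r ` P" and C2P: "C2 \<notin> insert r ` P" using okf(1,9) unfolding C1_def C2_def by auto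
    have C12: "C1 \<noteq> C2"
    proof
      assume "C1 = C2"
      have "I1 \<noteq> {}" using okf(5) k by auto
      then obtain x where "x \<in> I1" by auto
      then have "x \<in> C2" using \<open>C1 = C2\<close> unfolding C1_def by auto
      then show False using \<open>x \<in> I1\<close> okf(7,8,9) unfolding C2_def by auto
    qed
    consider "i = r" | "i = v" | "i \<in> I1" | "i \<in> I2" | B where "B \<in> P" "i \<in> B" using i by auto
    then show ?thesis
    proof cases
      case 1
      have "{e\<in>snd (shape r v I1 I2 P). i \<in> e} = {C1, C2} \<union> (insert r) ` P" unfolding Es 1 C1_def C2_def by auto
      then have "sig i = (\<Sum>e\<in>{C1, C2} \<union> (insert r) ` P. \<Sum>j\<in>e-{r}. p j)" unfolding sig_def 1 by simp
      also have "\<dots> = (\<Sum>j\<in>C1-{r}. p j) + (\<Sum>j\<in>C2-{r}. p j) + (\<Sum>e\<in>(insert r) ` P. \<Sum>j\<in>e-{r}. p j)"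
        using C1P C2P C12 okf(4) by (simp add: sum.union_disjoint)
      also have "(\<Sum>e\<in>(insert r) ` P. \<Sum>j\<in>e-{r}. p j) = (\<Sum>B\<in>P. \<Sum>j\<in>B. p j)"
        using sum.reindex[OF injP, of "\<lambda>e. \<Sum>j\<in>e-{r}. p j"] okf(8) by (auto intro!: sum.cong simp: insert_Diff_if)
      also have "\<dots> = (\<Sum>B\<in>P. K * z)" using sB by simp
      also have "C1 - {r} = insert v I1" unfolding C1_def using okf(1,8) by auto
      also have "C2 - {r} = insert v I2" unfolding C2_def using okf(1,8) by auto
      finally have "sig i = (a + (K - 1) * b) + (a + (K - 1) * b) + t * K * z"
        using okf(2,3,9) pv sI1 sI2 unfolding t_def by simp
      then show ?thesis using eqs(1) pr 1 by simp
    next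
      case 2
      have "{e\<in>snd (shape r v I1 I2 P). i \<in> e} = {C1, C2}" unfolding Es 2 C1_def C2_def using okf(1,9) by auto
      then have "sig i = (\<Sum>j\<in>C1-{v}. p j) + (\<Sum>j\<in>C2-{v}. p j)" unfolding sig_def 2 using C12 by simp
      also have "C1 - {v} = insert r I1" unfolding C1_def using okf(1,9) by auto
      also have "C2 - {v} = insert r I2" unfolding C2_def using okf(1,9) by auto
      finally have "sig i = (1 + (K - 1) * b) + (1 + (K - 1) * b)"
        using okf(2,3,8) pr sI1 sI2 by simp
      then show ?thesis using eqs(2) pv 2 by simp
    next
      case 3
      have "{e\<in>snd (shape r v I1 I2 P). i \<in> e} = {C1}" unfolding Es C1_def C2_def using 3 okf(7,8,9,10) by auto
      then have "sig i = (\<Sum>j\<in>C1-{i}. p j)" unfolding sig_def by simp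
      also have "C1 - {i} = insert r (insert v (I1 - {i}))" unfolding C1_def using 3 okf(8,9) by auto
      finally have "sig i = 1 + (a + (K - 2) * b)"
        using okf(1,2,8,9) pr pv sIi[of I1 i] 3 by simp
      then show ?thesis using eqs(3) pI 3 by simp
    next
      case 4
      have "{e\<in>snd (shape r v I1 I2 P). i \<in> e} = {C2}" unfolding Es C1_def C2_def using 4 okf(7,8,9,10) by auto
      then have "sig i = (\<Sum>j\<in>C2-{i}. p j)" unfolding sig_def by simp
      also have "C2 - {i} = insert r (insert v (I2 - {i}))" unfolding C2_def using 4 okf(8,9) by auto
      finally have "sig i = 1 + (a + (K - 2) * b)"
        using okf(1,3,8,9) pr pv sIi[of I2 i] 4 by simp
      then show ?thesis using eqs(3) pI 4 by simp
    next
      case (5 B)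
      have ir: "i \<noteq> r" "i \<noteq> v" "i \<notin> I1" "i \<notin> I2" using 5 okf(8,9,10) by auto
      have uniq: "B' = B" if "B' \<in> P" "i \<in> insert r B'" for B'
      proof (rule ccontr)
        assume "B' \<noteq> B"
        then have "B' \<inter> B = {}" using okf(12) that(1) 5(1) by blast
        moreover have "i \<in> B'" using that(2) ir(1) by simp
        ultimately show False using 5(2) by blast
      qed
      have "{e\<in>snd (shape r v I1 I2 P). i \<in> e} = {insert r B}"
      proof
        show "{insert r B} \<subseteq> {e\<in>snd (shape r v I1 I2 P). i \<in> e}" unfolding Es using 5 by simp
        show "{e\<in>snd (shape r v I1 I2 P). i \<in> e} \<subseteq> {insert r B}"
        proof
          fix e assume e: "e \<in> {e\<in>snd (shape r v I1 I2 P). i \<in> e}"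
          then have "e \<in> {C1, C2} \<union> (insert r) ` P" "i \<in> e" unfolding Es by auto
          moreover have "i \<notin> C1" "i \<notin> C2" unfolding C1_def C2_def using ir by auto
          ultimately obtain B' where "B' \<in> P" "e = insert r B'" by auto
          then show "e \<in> {insert r B}" using uniq \<open>i \<in> e\<close> by simp
        qed
      qed
      then have "sig i = (\<Sum>j\<in>insert r B-{i}. p j)" unfolding sig_def by simp
      also have "insert r B - {i} = insert r (B - {i})" using 5 okf(8) by auto
      finally have "sig i = 1 + (K - 1) * z"
        using okf(8,11) pr sBi[OF 5] 5 by simp
      moreover have "p i = z" using pP 5 by blast
      ultimately show ?thesis using eqs(4) by simp
    qed
  qed
  obtain hg un where hg: "hypergraph (shape r v I1 I2 P)" and un: "uniform k (shape r v I1 I2 P)"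
    using shape_hg[OF k ok] by blast
  show "\<forall>i\<in>fst (shape r v I1 I2 P). (\<Sum>j\<in>fst (shape r v I1 I2 P). adj (shape r v I1 I2 P) i j * p j) = lamk k (card P) * p i"
  proof
    fix i assume i: "i \<in> fst (shape r v I1 I2 P)"
    have "(\<Sum>j\<in>fst (shape r v I1 I2 P). adj (shape r v I1 I2 P) i j * p j) = (1 / K) * sig i"
      unfolding sig_def K_def by (rule Aop_edges[OF hg un])
    also have "\<dots> = lamk k (card P) * p i" using sig_th i Vs unfolding lamk_def th_def K_def t_def by simp
    finally show "(\<Sum>j\<in>fst (shape r v I1 I2 P). adj (shape r v I1 I2 P) i j * p j) = lamk k (card P) * p i" .
  qed
qed


lemma shape_iso:
  assumes ok: "shape_ok k r v I1 I2 P" and ok': "shape_ok k r' v' I1' I2' P'" and cP: "card P = card P'"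
  shows "hg_iso (shape r v I1 I2 P) (shape r' v' I1' I2' P')"
proof -
  have o: "r \<noteq> v" "finite I1" "finite I2" "finite P" "card I1 = k - 2" "card I2 = k - 2" "I1 \<inter> I2 = {}"
    "r \<notin> I1 \<union> I2 \<union> \<Union>P" "v \<notin> I1 \<union> I2 \<union> \<Union>P" "(I1 \<union> I2) \<inter> \<Union>P = {}"
    "\<forall>B\<in>P. finite B \<and> card B = k - 1" "\<forall>B\<in>P. \<forall>B'\<in>P. B \<noteq> B' \<longrightarrow> B \<inter> B' = {}"
    using ok unfolding shape_ok_def by auto
  have o': "r' \<noteq> v'" "finite I1'" "finite I2'" "finite P'" "card I1' = k - 2" "card I2' = k - 2" "I1' \<inter> I2' = {}"
    "r' \<notin> I1' \<union> I2' \<union> \<Union>P'" "v' \<notin> I1' \<union> I2' \<union> \<Union>P'" "(I1' \<union> I2') \<inter> \<Union>P' = {}"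
    "\<forall>B\<in>P'. finite B \<and> card B = k - 1" "\<forall>B\<in>P'. \<forall>B'\<in>P'. B \<noteq> B' \<longrightarrow> B \<inter> B' = {}"
    using ok' unfolding shape_ok_def by auto
  obtain g1 where g1: "bij_betw g1 I1 I1'" using finite_same_card_bij[OF o(2) o'(2)] o(5) o'(5) by auto
  obtain g2 where g2: "bij_betw g2 I2 I2'" using finite_same_card_bij[OF o(3) o'(3)] o(6) o'(6) by auto
  obtain be where be: "bij_betw be P P'" using finite_same_card_bij[OF o(4) o'(4) cP] by auto
  have "\<forall>B\<in>P. \<exists>g. bij_betw g B (be B)"
  proof
    fix B assume B: "B \<in> P"
    then have "be B \<in> P'" using be by (meson bij_betwE)
    then show "\<exists>g. bij_betw g B (be B)" using o(11) o'(11) B by (intro finite_same_card_bij) auto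
  qed
  then obtain ga where ga: "\<forall>B\<in>P. bij_betw (ga B) B (be B)" by metis
  define blk where "blk x = (THE B. B \<in> P \<and> x \<in> B)" for x
  have blk: "blk x = B" if "B \<in> P" "x \<in> B" for x B
    unfolding blk_def using that o(12) by (intro the_equality) auto
  define f where "f x = (if x = r then r' else if x = v then v' else if x \<in> I1 then g1 x
      else if x \<in> I2 then g2 x else ga (blk x) x)" for x
  have fr: "f r = r'" unfolding f_def by simp
  have fv: "f v = v'" unfolding f_def using o(1) by simp
  have f1: "bij_betw f I1 I1'" using g1 o(8,9) by (subst bij_betw_cong[of _ _ g1]) (auto simp: f_def)
  have f2: "bij_betw f I2 I2'" using g2 o(7,8,9) by (subst bij_betw_cong[of _ _ g2]) (auto simp: f_def)
  have fB: "bij_betw f B (be B)" if B: "B \<in> P" for B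
  proof -
    have "\<And>x. x \<in> B \<Longrightarrow> f x = ga B x"
      unfolding f_def using o(8,9,10) blk[OF B] B by auto
    then show ?thesis using ga B by (subst bij_betw_cong[of _ _ "ga B"]) auto
  qed
  have disj: "disjoint_family_on be P"
    unfolding disjoint_family_on_def
  proof (intro ballI impI)
    fix B B' assume "B \<in> P" "B' \<in> P" "B \<noteq> B'"
    then have "be B \<noteq> be B'" "be B \<in> P'" "be B' \<in> P'" using be by (auto simp: bij_betw_def inj_on_def)
    then show "be B \<inter> be B' = {}" using o'(12) by blast
  qed
  have fU: "bij_betw f (\<Union>B\<in>P. B) (\<Union>B\<in>P. be B)" by (rule bij_betw_UNION_disjoint[OF disj fB])
  have UP': "(\<Union>B\<in>P. be B) = \<Union>P'" using be by (simp add: bij_betw_def)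
  have fU': "bij_betw f (\<Union>P) (\<Union>P')" using fU UP' by simp
  have fV: "bij_betw f ({r} \<union> ({v} \<union> (I1 \<union> (I2 \<union> \<Union>P)))) ({r'} \<union> ({v'} \<union> (I1' \<union> (I2' \<union> \<Union>P'))))"
  proof (intro bij_betw_combine)
    show "bij_betw f {r} {r'}" using fr by simp
    show "bij_betw f {v} {v'}" using fv by simp
  qed (use f1 f2 fU' o' in auto)
  have V: "fst (shape r v I1 I2 P) = {r} \<union> ({v} \<union> (I1 \<union> (I2 \<union> \<Union>P)))" unfolding shape_def by auto
  have V': "fst (shape r' v' I1' I2' P') = {r'} \<union> ({v'} \<union> (I1' \<union> (I2' \<union> \<Union>P')))" unfolding shape_def by auto
  have iI1: "f ` I1 = I1'" "f ` I2 = I2'" using f1 f2 by (auto simp: bij_betw_def)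
  have iB: "\<And>B. B \<in> P \<Longrightarrow> f ` B = be B" using fB by (auto simp: bij_betw_def)
  have "(\<lambda>e. f ` e) ` snd (shape r v I1 I2 P) = {insert r' (insert v' I1'), insert r' (insert v' I2')} \<union> (\<lambda>B. insert r' (be B)) ` P"
    unfolding shape_def using iI1 iB fr fv by (auto simp: image_image)
  also have "(\<lambda>B. insert r' (be B)) ` P = insert r' ` P'"
    using be by (simp add: bij_betw_def image_image[symmetric])
  finally have E: "snd (shape r' v' I1' I2' P') = (\<lambda>e. f ` e) ` snd (shape r v I1 I2 P)"
    unfolding shape_def by simp
  show ?thesis unfolding hg_iso_def using fV E V V' by auto
qed

lemma shape_sr:
  assumes k: "k \<ge> 3" and ok: "shape_ok k r v I1 I2 P"
  shows "spectral_radius (shape r v I1 I2 P) = lamk k (card P)"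
    "hg_eigenvalue (shape r v I1 I2 P) (complex_of_real (lamk k (card P)))"
  using sr_eq[OF shape_hg(1)[OF k ok] shape_eig[OF k ok]] by auto

lemma pvec_max:
  assumes k: "k \<ge> 3" and ok: "shape_ok k r v I1 I2 P"
    and x: "x \<in> fst (shape r v I1 I2 P)" "x \<noteq> r" "x \<noteq> v \<or> card P > 0"
  shows "pvec k (card P) r v I1 I2 x < pvec k (card P) r v I1 I2 r"
proof -
  define K where "K = real k - 1"
  define t where "t = real (card P)"
  have K2: "K \<ge> 2" unfolding K_def using k by simp
  have t0: "t \<ge> 0" unfolding t_def by simp
  note eqs = th_eqs[OF K2 t0]
  have r1: "pvec k (card P) r v I1 I2 r = 1" unfolding pvec_def by simp
  have "pvec k (card P) r v I1 I2 x < 1"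
  proof (cases "x = v")
    case True
    then have "card P > 0" using x by auto
    then have "t > 0" unfolding t_def by simp
    then show ?thesis using True x(2) eqs(12) unfolding pvec_def Let_def K_def t_def by simp
  next
    case False
    then show ?thesis using x(2) eqs(9,10) unfolding pvec_def Let_def K_def t_def by simp
  qed
  then show ?thesis using r1 by simp
qed

lemma arith1:
  assumes "(k::nat) \<ge> 1" "m \<ge> 2"
  shows "2*k-2 + (m-2)*(k-1) = (k-1)*m"
proof -
  obtain a where a: "k = a + 1" using assms(1) by (metis le_add_diff_inverse2)
  obtain b where b: "m = b + 2" using assms(2) by (metis le_add_diff_inverse2)
  show ?thesis unfolding a b by (simp add: algebra_simps)
qed

definition blockf :: "nat \<Rightarrow> nat \<Rightarrow> nat set" where
  "blockf k j = {2*k-2 + j*(k-1) ..< 2*k-2 + (j+1)*(k-1)}"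

lemma Ustar_shape:
  assumes k: "k \<ge> 3" and m: "m \<ge> 2" and n: "n = (k - 1) * m"
  defines "PB \<equiv> blockf k ` {..<m-2}"
  shows "Ustar k n = shape 0 1 {2..<k} {k..<2*k-2} PB"
    "shape_ok k (0::nat) 1 {2..<k} {k..<2*k-2} PB"
    "card PB = m - 2"
proof -
  have nd: "n div (k - 1) = m" using n k by simp
  have bl_lo: "x \<ge> 2*k-2" if "x \<in> blockf k j" for x j using that unfolding blockf_def by auto
  have bl_hi: "x < n" if "x \<in> blockf k j" "j < m - 2" for x j
  proof -
    have "x < 2*k-2 + (j+1)*(k-1)" using that unfolding blockf_def by auto
    also have "(j+1)*(k-1) \<le> (m-2)*(k-1)" using that(2) by (intro mult_right_mono) auto
    finally have "x < 2*k-2 + (m-2)*(k-1)" by simp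
    also have "2*k-2 + (m-2)*(k-1) = n" unfolding n using k m arith1 by simp
    finally show ?thesis .
  qed
  have UPB: "\<Union>PB = {2*k-2..<n}"
  proof
    show "\<Union>PB \<subseteq> {2*k-2..<n}" unfolding PB_def using bl_lo bl_hi by fastforce
    show "{2*k-2..<n} \<subseteq> \<Union>PB"
    proof
      fix x assume x: "x \<in> {2*k-2..<n}"
      define y where "y = x - (2*k-2)"
      define j where "j = y div (k - 1)"
      have dm: "y = j * (k-1) + y mod (k-1)" unfolding j_def by (metis div_mult_mod_eq)
      have mlt: "y mod (k-1) < k-1" using k by simp
      have jl: "j * (k-1) \<le> y" using dm by linarith
      have jh: "y < (j+1) * (k-1)" using dm mlt by (metis add_less_cancel_left add_mult_distrib mult_1)
      have "n = 2*k-2 + (m-2)*(k-1)" unfolding n using k m arith1 by simp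
      then have "y < (m-2)*(k-1)" using x unfolding y_def
        by (metis atLeastLessThan_iff diff_less_mono less_diff_conv2 add.commute)
      then have "j < m - 2" using jl by (metis le_less_trans mult_less_cancel2)
      moreover have "x \<in> blockf k j" unfolding blockf_def using jl jh x unfolding y_def by auto
      ultimately show "x \<in> \<Union>PB" unfolding PB_def by auto
    qed
  qed
  have bdisj: "blockf k j \<inter> blockf k j' = {}" if "j \<noteq> j'" for j j'
  proof -
    have "(j+1)*(k-1) \<le> j'*(k-1) \<or> (j'+1)*(k-1) \<le> j*(k-1)" using that
      by (metis Suc_eq_plus1 linorder_neqE_nat mult_le_mono1 Suc_leI)
    then show ?thesis unfolding blockf_def by auto
  qed
  have bcard: "card (blockf k j) = k - 1" for j
  proof -
    have "2*k-2 + (j+1)*(k-1) = (2*k-2 + j*(k-1)) + (k-1)" by (simp only: add_mult_distrib mult_1 add.assoc)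
    then show ?thesis unfolding blockf_def by simp
  qed
  have binj: "inj_on (blockf k) {..<m-2}"
  proof (rule inj_onI)
    fix j j' assume "blockf k j = blockf k j'"
    moreover have "blockf k j \<noteq> {}" using bcard[of j] k by (metis card.empty diff_is_0_eq not_less_eq_eq numeral_le_one_iff semiring_norm(70) Suc_leD numeral_3_eq_3 le_antisym less_Suc_eq_le diff_Suc_1 Suc_n_not_le_n)
    ultimately show "j = j'" using bdisj by blast
  qed
  show "card PB = m - 2" unfolding PB_def using binj by (simp add: card_image)
  show "shape_ok k (0::nat) 1 {2..<k} {k..<2*k-2} PB"
    unfolding shape_ok_def
  proof (intro conjI)
    show "finite PB" unfolding PB_def by simp
    show "(0::nat) \<notin> {2..<k} \<union> {k..<2*k-2} \<union> \<Union>PB" using UPB k by auto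
    show "(1::nat) \<notin> {2..<k} \<union> {k..<2*k-2} \<union> \<Union>PB" using UPB k by auto
    show "({2..<k} \<union> {k..<2*k-2}) \<inter> \<Union>PB = {}" using UPB by auto
    show "\<forall>B\<in>PB. finite B \<and> card B = k - 1" unfolding PB_def using bcard by (auto simp: blockf_def)
    show "\<forall>B\<in>PB. \<forall>B'\<in>PB. B \<noteq> B' \<longrightarrow> B \<inter> B' = {}" unfolding PB_def using bdisj by (metis (no_types, lifting) imageE)
    show "card {k..<2*k-2} = k - 2" using k by simp
  qed auto
  have V: "{0..<n} = insert 0 (insert 1 ({2..<k} \<union> {k..<2*k-2} \<union> \<Union>PB))"
  proof -
    have "(k-1)*2 \<le> (k-1)*m" using m by simp
    then have n2: "2*k - 2 \<le> n" unfolding n by (simp add: algebra_simps)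
    show ?thesis using UPB k n2 by auto
  qed
  have E1: "{{0,1} \<union> {2..<k}, {0,1} \<union> {k..<2*k-2}} = {insert 0 (insert 1 {2..<k}), insert (0::nat) (insert 1 {k..<2*k-2})}"
    by auto
  have E2: "{insert 0 {2*k-2 + j*(k-1) ..< 2*k-2 + (j+1)*(k-1)} | j. j < n div (k-1) - 2} = insert 0 ` PB"
    unfolding nd PB_def blockf_def by auto
  show "Ustar k n = shape 0 1 {2..<k} {k..<2*k-2} PB"
    unfolding Ustar_def shape_def V E1 E2 by simp
qed


lemma list_cross:
  "xs \<noteq> [] \<Longrightarrow> hd xs \<in> X \<Longrightarrow> last xs \<notin> X \<Longrightarrow> \<exists>i. Suc i < length xs \<and> xs ! i \<in> X \<and> xs ! Suc i \<notin> X"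
proof (induction xs)
  case Nil then show ?case by simp
next
  case (Cons a xs)
  show ?case
  proof (cases xs)
    case Nil then show ?thesis using Cons by simp
  next
    case (Cons b ys)
    show ?thesis
    proof (cases "b \<in> X")
      case True
      then have "\<exists>i. Suc i < length xs \<and> xs ! i \<in> X \<and> xs ! Suc i \<notin> X"
        using Cons.IH Cons.prems \<open>xs = b # ys\<close> by simp
      then obtain i where "Suc i < length xs" "xs ! i \<in> X" "xs ! Suc i \<notin> X" by blast
      then show ?thesis by (intro exI[of _ "Suc i"]) auto
    next
      case False
      then show ?thesis using Cons.prems \<open>xs = b # ys\<close> by (intro exI[of _ 0]) auto
    qed
  qed
qed

lemma conn_cross:
  assumes conn: "hg_connected G" and X: "X \<subseteq> fst G" "r \<in> X" "X \<noteq> fst G"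
  shows "\<exists>e\<in>snd G. e \<inter> X \<noteq> {} \<and> e - X \<noteq> {}"
proof -
  obtain u where u: "u \<in> fst G" "u \<notin> X" using X by auto
  have "r \<in> fst G" using X by auto
  then obtain vs es where hp: "hyperpath G vs es" and h: "hd vs = r" and l: "last vs = u"
    using conn u unfolding hg_connected_def by blast
  have len: "length vs = Suc (length es)" using hp unfolding hyperpath_def by simp
  then have "vs \<noteq> []" by auto
  then obtain i where i: "Suc i < length vs" "vs ! i \<in> X" "vs ! Suc i \<notin> X"
    using list_cross[of vs X] h l X u by auto
  have ie: "i < length es" using i len by simp
  then have "es ! i \<in> snd G" "vs ! i \<in> es ! i" "vs ! Suc i \<in> es ! i"
    using hp unfolding hyperpath_def by auto
  then show ?thesis using i by blast
qed

definition INV :: "'a hypergraph \<Rightarrow> 'a \<Rightarrow> 'a set \<Rightarrow> ('a set \<Rightarrow> 'a set) \<Rightarrow> bool" where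
  "INV G r X Q \<longleftrightarrow> r \<in> X \<and> X \<subseteq> fst G \<and>
     (\<forall>e\<in>snd G. Q e \<subseteq> e \<inter> X \<and> e - Q e \<noteq> {} \<and> (Q e \<noteq> {} \<longrightarrow> e \<subseteq> X)) \<and>
     (\<forall>e\<in>snd G. \<forall>e'\<in>snd G. e \<noteq> e' \<longrightarrow> Q e \<inter> Q e' = {}) \<and>
     (\<Union>e\<in>snd G. Q e) = X - {r}"

lemma INV_step:
  assumes hg: "hypergraph G" and conn: "hg_connected G" and inv: "INV G r X Q" and ne: "X \<noteq> fst G"
  shows "\<exists>X' Q'. INV G r X' Q' \<and> card (fst G - X') < card (fst G - X)"
proof -
  have i: "r \<in> X" "X \<subseteq> fst G" "\<forall>e\<in>snd G. Q e \<subseteq> e \<inter> X \<and> e - Q e \<noteq> {} \<and> (Q e \<noteq> {} \<longrightarrow> e \<subseteq> X)"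
    "\<forall>e\<in>snd G. \<forall>e'\<in>snd G. e \<noteq> e' \<longrightarrow> Q e \<inter> Q e' = {}" "(\<Union>e\<in>snd G. Q e) = X - {r}"
    using inv unfolding INV_def by auto
  obtain e where e: "e \<in> snd G" "e \<inter> X \<noteq> {}" "e - X \<noteq> {}" using conn_cross[OF conn i(2,1) ne] by blast
  have Oe: "Q e = {}" using i(3) e by blast
  have eV: "e \<subseteq> fst G" using hg e unfolding hypergraph_def by auto
  define Q' where "Q' = Q(e := e - X)"
  define X' where "X' = X \<union> e"
  have I1: "INV G r X' Q'" unfolding INV_def
  proof (intro conjI)
    show "r \<in> X'" "X' \<subseteq> fst G" using i eV unfolding X'_def by auto
    show "\<forall>f\<in>snd G. Q' f \<subseteq> f \<inter> X' \<and> f - Q' f \<noteq> {} \<and> (Q' f \<noteq> {} \<longrightarrow> f \<subseteq> X')"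
      using i(3) e unfolding Q'_def X'_def by auto
    show "\<forall>f\<in>snd G. \<forall>f'\<in>snd G. f \<noteq> f' \<longrightarrow> Q' f \<inter> Q' f' = {}"
    proof (intro ballI impI)
      fix f f' assume f: "f \<in> snd G" "f' \<in> snd G" "f \<noteq> f'"
      show "Q' f \<inter> Q' f' = {}"
      proof (cases "f = e \<or> f' = e")
        case True
        then show ?thesis using f i(3) unfolding Q'_def by auto
      next
        case False
        then show ?thesis using f i(4) unfolding Q'_def by auto
      qed
    qed
    show "(\<Union>f\<in>snd G. Q' f) = X' - {r}"
    proof -
      have ins: "snd G = insert e (snd G - {e})" using e(1) by blast
      have "(\<Union>f\<in>snd G. Q' f) = Q' e \<union> (\<Union>f\<in>snd G - {e}. Q' f)"
        by (metis UN_insert ins)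
      also have "(\<Union>f\<in>snd G - {e}. Q' f) = (\<Union>f\<in>snd G - {e}. Q f)" unfolding Q'_def by simp
      also have "\<dots> = Q e \<union> (\<Union>f\<in>snd G - {e}. Q f)" using Oe by simp
      also have "\<dots> = (\<Union>f\<in>snd G. Q f)" by (metis UN_insert ins)
      also have "Q' e = e - X" unfolding Q'_def by simp
      finally have "(\<Union>f\<in>snd G. Q' f) = (\<Union>f\<in>snd G. Q f) \<union> (e - X)" by blast
      then show ?thesis using i(5,1) unfolding X'_def by auto
    qed
  qed
  have I2: "card (fst G - X') < card (fst G - X)"
  proof (rule psubset_card_mono)
    show "finite (fst G - X)" using hg unfolding hypergraph_def by auto
    show "fst G - X' \<subset> fst G - X" using e eV unfolding X'_def by auto
  qed
  show ?thesis by (intro exI[of _ X'] exI[of _ Q'] conjI I1 I2)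
qed

lemma decomp:
  assumes hg: "hypergraph G" and conn: "hg_connected G" and r: "r \<in> fst G"
  shows "\<exists>Q. (\<forall>e\<in>snd G. Q e \<subseteq> e \<and> e - Q e \<noteq> {}) \<and>
     (\<forall>e\<in>snd G. \<forall>e'\<in>snd G. e \<noteq> e' \<longrightarrow> Q e \<inter> Q e' = {}) \<and>
     (\<Union>e\<in>snd G. Q e) = fst G - {r}"
proof -
  have main: "\<exists>Q'. INV G r (fst G) Q'" if "INV G r X Q" "card (fst G - X) = N" for N X Q
    using that
  proof (induction N arbitrary: X Q rule: less_induct)
    case (less N)
    show ?case
    proof (cases "X = fst G")
      case True then show ?thesis using less.prems(1) by blast
    next
      case False
      obtain X' Q' where i': "INV G r X' Q'" and c': "card (fst G - X') < card (fst G - X)"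
        using INV_step[OF hg conn less.prems(1) False] by blast
      have "card (fst G - X') < N" using c' less.prems(2) by simp
      from less.IH[OF this i' refl] show ?thesis .
    qed
  qed
  have i0: "INV G r {r} (\<lambda>_. {})" unfolding INV_def
  proof (intro conjI)
    show "\<forall>e\<in>snd G. {} \<subseteq> e \<inter> {r} \<and> e - {} \<noteq> {} \<and> ({} \<noteq> {} \<longrightarrow> e \<subseteq> {r})"
      using hg unfolding hypergraph_def by fastforce
  qed (use r in auto)
  obtain Q where "INV G r (fst G) Q" using main[OF i0 refl] by blast
  then have q1: "\<forall>e\<in>snd G. Q e \<subseteq> e \<and> e - Q e \<noteq> {}"
    and q2: "\<forall>e\<in>snd G. \<forall>e'\<in>snd G. e \<noteq> e' \<longrightarrow> Q e \<inter> Q e' = {}"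
    and q3: "(\<Union>e\<in>snd G. Q e) = fst G - {r}"
    unfolding INV_def by auto
  show ?thesis by (intro exI[of _ Q] conjI q1 q2 q3)
qed

lemma count_special:
  fixes G :: "'a hypergraph"
  assumes hg: "hypergraph G" and un: "uniform k G" and k: "k \<ge> 3"
    and cV: "card (fst G) = (k - 1) * card (snd G)"
    and O1: "\<forall>e\<in>snd G. Q e \<subseteq> e \<and> e - Q e \<noteq> {}"
    and O2: "\<forall>e\<in>snd G. \<forall>e'\<in>snd G. e \<noteq> e' \<longrightarrow> Q e \<inter> Q e' = {}"
    and O3: "(\<Union>e\<in>snd G. Q e) = fst G - {r}" and r: "r \<in> fst G"
  shows "\<exists>s\<in>snd G. card (Q s) = k - 2 \<and> (\<forall>e\<in>snd G - {s}. card (Q e) = k - 1)"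
proof -
  let ?E = "snd G"
  have fE: "finite ?E" using hg_finite_edges[OF hg] .
  have fe: "\<And>e. e \<in> ?E \<Longrightarrow> finite e" using hg_finite_edge[OF hg] .
  have fO: "\<And>e. e \<in> ?E \<Longrightarrow> finite (Q e)" using fe O1 by (meson finite_subset)
  have le: "\<And>e. e \<in> ?E \<Longrightarrow> card (Q e) \<le> k - 1"
  proof -
    fix e assume e: "e \<in> ?E"
    have "Q e \<subset> e" using O1 e by auto
    then have "card (Q e) < card e" using fe[OF e] by (rule psubset_card_mono[rotated])
    then show "card (Q e) \<le> k - 1" using un e unfolding uniform_def by auto
  qed
  have fV: "finite (fst G)" using hg unfolding hypergraph_def by auto
  have "(\<Sum>e\<in>?E. card (Q e)) = card (\<Union>e\<in>?E. Q e)"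
    using fE fO O2 by (intro card_UN_disjoint[symmetric]) auto
  also have "\<dots> = card (fst G) - 1" using O3 r fV by simp
  finally have sc: "(\<Sum>e\<in>?E. card (Q e)) = (k - 1) * card ?E - 1" using cV by simp
  define d where "d e = k - 1 - card (Q e)" for e
  have "(\<Sum>e\<in>?E. d e) + (\<Sum>e\<in>?E. card (Q e)) = (\<Sum>e\<in>?E. k - 1)"
    unfolding d_def sum.distrib[symmetric]
  proof (rule sum.cong)
    fix x assume "x \<in> ?E"
    then have "card (Q x) \<le> k - 1" by (rule le)
    then show "k - 1 - card (Q x) + card (Q x) = k - 1" by simp
  qed simp
  then have sd: "(\<Sum>e\<in>?E. d e) = 1"
  proof -
    assume h: "(\<Sum>e\<in>?E. d e) + (\<Sum>e\<in>?E. card (Q e)) = (\<Sum>e\<in>?E. k - 1)"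
    have "?E \<noteq> {}"
    proof
      assume "?E = {}"
      then have "card (fst G) = 0" using cV by simp
      then show False using fV r by auto
    qed
    then have "card ?E \<ge> 1" using fE by (simp add: Suc_leI card_gt_0_iff)
    then have "(k - 1) * card ?E \<ge> 1" using k by simp
    moreover have "(\<Sum>e\<in>?E. k - 1) = (k - 1) * card ?E" by simp
    ultimately have "(\<Sum>e\<in>?E. d e) + ((k - 1) * card ?E - 1) = (k - 1) * card ?E" "(k - 1) * card ?E \<ge> 1"
      using h sc by auto
    then show ?thesis by linarith
  qed
  obtain s where s: "s \<in> ?E" "d s \<noteq> 0" using sd by (metis sum.neutral zero_neq_one)
  have ds: "d s \<le> 1" using sd member_le_sum[OF s(1), of d] fE by simp
  have de: "d e = 0" if e: "e \<in> ?E - {s}" for e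
  proof -
    have "e \<noteq> s" using e by simp
    then have "d s + d e = (\<Sum>x\<in>{s, e}. d x)" by simp
    also have "\<dots> \<le> (\<Sum>x\<in>?E. d x)" using e s(1) fE by (intro sum_mono2) auto
    finally show ?thesis using sd s(2) by simp
  qed
  show ?thesis
  proof (intro bexI[of _ s] conjI ballI)
    show "card (Q s) = k - 2" using ds s(2) le[OF s(1)] unfolding d_def by simp
    fix e assume e: "e \<in> ?E - {s}"
    then show "card (Q e) = k - 1" using de[OF e] le[of e] unfolding d_def by simp
  qed (use s in auto)
qed


lemma pp_insert:
  assumes "finite B" "a \<notin> B"
  shows "pp (insert a B) w = 2 * w a * sum w B + pp B w"
  using assms unfolding pp_def by (simp add: power2_eq_square algebra_simps)

lemma unicyclic_m2:
  assumes k: "k \<ge> 3" and u: "unicyclic k G"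
  shows "card (snd G) \<ge> 2"
proof (rule ccontr)
  assume "\<not> card (snd G) \<ge> 2"
  then have c: "card (snd G) = 0 \<or> card (snd G) = 1" by auto
  have hg: "hypergraph G" and un: "uniform k G" and cV: "card (fst G) = (k - 1) * card (snd G)"
    using u unfolding unicyclic_def by auto
  have fV: "finite (fst G)" "fst G \<noteq> {}" using hg unfolding hypergraph_def by auto
  show False
  proof (cases "card (snd G) = 0")
    case True
    then show False using cV fV by simp
  next
    case False
    then have "card (snd G) = 1" using c by simp
    then obtain e where e: "snd G = {e}" by (meson card_1_singletonE)
    have "e \<subseteq> fst G" "card e = k" using hg un e unfolding hypergraph_def uniform_def by auto
    then have "k \<le> card (fst G)" using fV(1) by (metis card_mono)
    then show False using cV \<open>card (snd G) = 1\<close> k by simp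
  qed
qed

lemma core:
  fixes G :: "'a hypergraph"
  assumes k: "k \<ge> 3" and u: "unicyclic k G" and ev: "hg_eigenvalue G mu"
  shows "cmod mu \<le> lamk k (card (snd G) - 2)"
    and "cmod mu = lamk k (card (snd G) - 2) \<Longrightarrow>
         \<exists>r v2 I1 I2 P. G = shape r v2 I1 I2 P \<and> shape_ok k r v2 I1 I2 P \<and> card P = card (snd G) - 2"
proof -
  have hg: "hypergraph G" and un: "uniform k G" and conn: "hg_connected G"
    and cV: "card (fst G) = (k - 1) * card (snd G)"
    using u unfolding unicyclic_def by auto
  define V where "V = fst G"
  define E where "E = snd G"
  define m where "m = card E"
  define L where "L = lamk k (m - 2)"
  have m2: "m \<ge> 2" unfolding m_def E_def using unicyclic_m2[OF k u] .
  have fV: "finite V" "V \<noteq> {}" using hg unfolding hypergraph_def V_def by auto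
  have fE: "finite E" unfolding E_def using hg_finite_edges[OF hg] .
  have eV: "\<And>e. e \<in> E \<Longrightarrow> e \<subseteq> V" using hg unfolding hypergraph_def V_def E_def by auto
  have ck: "\<And>e. e \<in> E \<Longrightarrow> card e = k" using un unfolding uniform_def E_def by auto
  have fe: "\<And>e. e \<in> E \<Longrightarrow> finite e" using eV fV(1) by (meson finite_subset)
  obtain x where x0: "\<exists>v\<in>V. x v \<noteq> 0"
    and xe: "\<forall>i\<in>fst G. (\<Sum>j\<in>fst G. complex_of_real (adj G i j) * x j) = mu * x i"
    using ev unfolding hg_eigenvalue_def V_def by blast
  define w where "w i = cmod (x i)" for i
  have w0: "\<And>i. w i \<ge> 0" unfolding w_def by simp
  obtain r where r: "r \<in> V" "\<And>v. v \<in> V \<Longrightarrow> w v \<le> w r"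
  proof -
    have "Max (w ` V) \<in> w ` V" using fV by simp
    then obtain r where r1: "r \<in> V" and r2: "w r = Max (w ` V)" by auto
    have "\<And>v. v \<in> V \<Longrightarrow> w v \<le> w r" unfolding r2 using fV by simp
    then show ?thesis using that[OF r1] by blast
  qed
  have rG: "r \<in> fst G" using r(1) unfolding V_def .
  from decomp[OF hg conn rG] obtain Q where QQ: "(\<forall>e\<in>snd G. Q e \<subseteq> e \<and> e - Q e \<noteq> {}) \<and>
     (\<forall>e\<in>snd G. \<forall>e'\<in>snd G. e \<noteq> e' \<longrightarrow> Q e \<inter> Q e' = {}) \<and>
     (\<Union>e\<in>snd G. Q e) = fst G - {r}" ..
  have Q1': "\<forall>e\<in>snd G. Q e \<subseteq> e \<and> e - Q e \<noteq> {}"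
    and Q2': "\<forall>e\<in>snd G. \<forall>e'\<in>snd G. e \<noteq> e' \<longrightarrow> Q e \<inter> Q e' = {}"
    and Q3': "(\<Union>e\<in>snd G. Q e) = fst G - {r}"
    using QQ by (auto simp only:)
  have Q1: "\<forall>e\<in>E. Q e \<subseteq> e \<and> e - Q e \<noteq> {}" using Q1' unfolding E_def .
  have Q2: "\<forall>e\<in>E. \<forall>e'\<in>E. e \<noteq> e' \<longrightarrow> Q e \<inter> Q e' = {}" using Q2' unfolding E_def .
  have Q3: "(\<Union>e\<in>E. Q e) = V - {r}" using Q3' unfolding E_def V_def .
  have exs: "\<exists>s. s \<in> snd G \<and> card (Q s) = k - 2 \<and> (\<forall>e\<in>snd G - {s}. card (Q e) = k - 1)"
    using count_special[OF hg un k cV Q1' Q2' Q3' rG] by (simp only: Bex_def)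
  from exs obtain s where
    ss: "s \<in> snd G \<and> card (Q s) = k - 2 \<and> (\<forall>e\<in>snd G - {s}. card (Q e) = k - 1)" ..
  have s': "s \<in> snd G" "card (Q s) = k - 2" and cQ': "\<forall>e\<in>snd G - {s}. card (Q e) = k - 1"
    using ss by (auto simp only:)
  have s: "s \<in> E" "card (Q s) = k - 2" using s' unfolding E_def by auto
  have cQ: "\<And>e. e \<in> E - {s} \<Longrightarrow> card (Q e) = k - 1" using cQ' unfolding E_def by auto
  have fQ: "\<And>e. e \<in> E \<Longrightarrow> finite (Q e)" using Q1 fe by (meson finite_subset)
  have rQ: "\<And>e. e \<in> E \<Longrightarrow> r \<notin> Q e" using Q3 by blast
  have QV: "\<And>e. e \<in> E \<Longrightarrow> Q e \<subseteq> V" using Q1 eV by blast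
  have attach: "\<exists>a. a \<notin> Q e \<and> e = insert a (Q e) \<and> a \<in> V" if e: "e \<in> E" "e \<noteq> s" for e
  proof -
    have "card (e - Q e) = card e - card (Q e)" using Q1 e fe by (meson card_Diff_subset fQ)
    also have "\<dots> = 1" using ck[OF e(1)] cQ[of e] e k by simp
    finally obtain a where a: "e - Q e = {a}" by (meson card_1_singletonE)
    then have "e = insert a (Q e)" "a \<notin> Q e" using Q1 e by auto
    moreover have "a \<in> V" using a eV[OF e(1)] by auto
    ultimately show ?thesis by blast
  qed
  have "card (s - Q s) = 2"
  proof -
    have "card (s - Q s) = card s - card (Q s)" using Q1 s fe by (meson card_Diff_subset fQ)
    then show ?thesis using ck[OF s(1)] s(2) k by simp
  qed
  then obtain u1 u2 where uu: "s - Q s = {u1, u2}" "u1 \<noteq> u2" by (meson card_2_iff)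
  define v2 where "v2 = (if u1 = r then u2 else u1)"
  define ov where "ov = (if u1 = r then u1 else u2)"
  have so: "s - Q s = {v2, ov}" "v2 \<noteq> ov" "v2 \<noteq> r" using uu unfolding v2_def ov_def by auto
  have sQ: "s = insert v2 (insert ov (Q s))" "v2 \<notin> Q s" "ov \<notin> Q s" using so Q1 s(1) by auto
  have v2V: "v2 \<in> V" "ov \<in> V" using sQ eV[OF s(1)] by auto
  then obtain t where t: "t \<in> E" "v2 \<in> Q t" using Q3 so(3) by blast
  have ts: "t \<noteq> s" using t sQ(2) by auto
  define I1 where "I1 = Q t - {v2}"
  define I2 where "I2 = Q s"
  define P where "P = Q ` (E - {s, t})"
  define H where "H = shape r v2 I1 I2 P"
  have Qne: "\<And>e. e \<in> E \<Longrightarrow> Q e \<noteq> {}"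
  proof -
    fix e assume e: "e \<in> E"
    have "card (Q e) \<ge> 1"
    proof (cases "e = s")
      case True then show ?thesis using s k by simp
    next
      case False then show ?thesis using cQ[of e] e k by simp
    qed
    then show "Q e \<noteq> {}" by auto
  qed
  have Qinj: "inj_on Q E"
  proof (rule inj_onI)
    fix e e' assume ee: "e \<in> E" "e' \<in> E" "Q e = Q e'"
    show "e = e'"
    proof (rule ccontr)
      assume "e \<noteq> e'"
      then have "Q e \<inter> Q e' = {}" using Q2 ee(1,2) by simp
      then have "Q e = {}" using ee(3) by simp
      then show False using Qne[OF ee(1)] by simp
    qed
  qed
  have cP: "card P = m - 2"
  proof -
    have "card P = card (E - {s, t})" unfolding P_def using Qinj by (intro card_image) (auto intro: inj_on_subset)
    also have "\<dots> = m - 2" unfolding m_def using s(1) t(1) ts fE by (simp add: card_Diff_subset)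
    finally show ?thesis .
  qed
  have ok: "shape_ok k r v2 I1 I2 P" unfolding shape_ok_def
  proof (intro conjI)
    show "r \<noteq> v2" using so by simp
    show "finite I1" "finite I2" "finite P" unfolding I1_def I2_def P_def using fQ t s fE by auto
    show "card I1 = k - 2" unfolding I1_def using cQ[of t] t ts fQ[OF t(1)] by simp
    show "card I2 = k - 2" unfolding I2_def using s by simp
    have dts: "Q t \<inter> Q s = {}" using Q2 t(1) s(1) ts by simp
    have dot: "\<And>e. e \<in> E - {s, t} \<Longrightarrow> Q e \<inter> Q t = {} \<and> Q e \<inter> Q s = {}"
    proof -
      fix e assume e: "e \<in> E - {s, t}"
      then have "e \<noteq> t" "e \<noteq> s" "e \<in> E" by auto
      then show "Q e \<inter> Q t = {} \<and> Q e \<inter> Q s = {}" using Q2 t(1) s(1) by simp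
    qed
    show "I1 \<inter> I2 = {}" unfolding I1_def I2_def using dts by auto
    show "r \<notin> I1 \<union> I2 \<union> \<Union>P" unfolding I1_def I2_def P_def using rQ t(1) s(1) by auto
    show "v2 \<notin> I1 \<union> I2 \<union> \<Union>P"
    proof -
      have "\<And>e. e \<in> E - {s, t} \<Longrightarrow> v2 \<notin> Q e" using dot t(2) by auto
      then show ?thesis unfolding I1_def I2_def P_def using sQ(2) by auto
    qed
    show "(I1 \<union> I2) \<inter> \<Union>P = {}" unfolding I1_def I2_def P_def using dot by auto
    show "\<forall>B\<in>P. finite B \<and> card B = k - 1" unfolding P_def using fQ cQ by auto
    show "\<forall>B\<in>P. \<forall>B'\<in>P. B \<noteq> B' \<longrightarrow> B \<inter> B' = {}"
    proof (intro ballI impI)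
      fix B B' assume "B \<in> P" "B' \<in> P" "B \<noteq> B'"
      then obtain e e' where "e \<in> E" "e' \<in> E" "B = Q e" "B' = Q e'" unfolding P_def by auto
      moreover then have "e \<noteq> e'" using \<open>B \<noteq> B'\<close> by auto
      ultimately show "B \<inter> B' = {}" using Q2 by simp
    qed
  qed
  have Qt: "Q t = insert v2 I1" unfolding I1_def using t by auto
  have VH: "fst H = V"
  proof -
    have "fst H = insert r (insert v2 (I1 \<union> I2 \<union> \<Union>P))" unfolding H_def shape_def by simp
    also have "insert v2 (I1 \<union> I2 \<union> \<Union>P) = (\<Union>e\<in>E. Q e)"
    proof -
      have "E = insert t (insert s (E - {s, t}))" using s t by auto
      then have "(\<Union>e\<in>E. Q e) = Q t \<union> Q s \<union> (\<Union>e\<in>E - {s, t}. Q e)" by (metis UN_insert sup_assoc)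
      then show ?thesis unfolding Qt P_def I2_def by auto
    qed
    finally show ?thesis using Q3 r(1) by auto
  qed
  define g where "g e = (if e = s then insert r (insert v2 (Q s)) else insert r (Q e))" for e
  have EH: "snd H = g ` E"
  proof -
    have "snd H = {insert r (insert v2 I1), insert r (insert v2 I2)} \<union> insert r ` P"
      unfolding H_def shape_def by simp
    also have "\<dots> = g ` E"
    proof -
      have "E = insert t (insert s (E - {s, t}))" using s t by auto
      then have "g ` E = insert (g t) (insert (g s) (g ` (E - {s, t})))" by (metis image_insert)
      moreover have "g t = insert r (insert v2 I1)" unfolding g_def using ts Qt by simp
      moreover have "g s = insert r (insert v2 I2)" unfolding g_def I2_def by simp
      moreover have "g ` (E - {s, t}) = insert r ` P" unfolding P_def g_def by (auto simp: image_image)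
      ultimately show ?thesis by auto
    qed
    finally show ?thesis .
  qed
  have gQ: "\<And>e. e \<in> E \<Longrightarrow> Q e \<subseteq> g e" unfolding g_def by auto
  have ginj: "inj_on g E"
  proof (rule inj_onI)
    fix e e' assume e: "e \<in> E" "e' \<in> E" "g e = g e'"
    show "e = e'"
    proof (rule ccontr)
      assume ne: "e \<noteq> e'"
      have dis: "Q e \<inter> Q e' = {}" using Q2 e ne by blast
      have "\<And>a b. a \<in> E \<Longrightarrow> b \<in> E \<Longrightarrow> a \<noteq> b \<Longrightarrow> g a = g b \<Longrightarrow> a \<noteq> s \<Longrightarrow> False"
      proof -
        fix a b assume ab: "a \<in> E" "b \<in> E" "a \<noteq> b" "g a = g b" "a \<noteq> s"
        have d: "Q a \<inter> Q b = {}" using Q2 ab by blast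
        have "Q a \<subseteq> g b" using gQ[OF ab(1)] ab(4) by simp
        moreover have "g b \<subseteq> insert r (insert v2 (Q b))" unfolding g_def by auto
        ultimately have "Q a \<subseteq> {r, v2}" using d by blast
        then have "Q a \<subseteq> {v2}" using rQ[OF ab(1)] by blast
        moreover have "card (Q a) = k - 1" using cQ ab by simp
        ultimately have "k - 1 \<le> 1" using card_mono[of "{v2}" "Q a"] by simp
        then show False using k by simp
      qed
      then show False using e ne by (metis (no_types))
    qed
  qed
  obtain hgH unH where hgH: "hypergraph H" and unH: "uniform k H"
    using shape_hg[OF k ok] unfolding H_def by blast
  define p where "p = pvec k (card P) r v2 I1 I2"
  have Lc: "lamk k (card P) = L" unfolding L_def cP ..
  have pp0: "\<forall>i\<in>fst H. p i > 0" and pe: "\<forall>i\<in>fst H. (\<Sum>j\<in>fst H. adj H i j * p j) = L * p i"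
    using shape_eig[OF k ok] unfolding p_def H_def Lc by auto
  define c where "c = 1 / (real k - 1)"
  have c0: "c > 0" unfolding c_def using k by simp
  have QFG: "QF G w = c * (\<Sum>e\<in>E. pp e w)" unfolding c_def E_def by (rule QF_edges[OF hg un])
  have QFH: "QF H w = c * (\<Sum>e\<in>E. pp (g e) w)"
  proof -
    have "QF H w = c * (\<Sum>f\<in>snd H. pp f w)" unfolding c_def by (rule QF_edges[OF hgH unH])
    also have "(\<Sum>f\<in>snd H. pp f w) = (\<Sum>e\<in>E. pp (g e) w)" unfolding EH using sum.reindex[OF ginj] by simp
    finally show ?thesis .
  qed
  define dl where "dl e = pp (g e) w - pp e w" for e
  have dl_ord: "dl e = 2 * (w r - w a) * sum w (Q e)" if e: "e \<in> E" "e \<noteq> s" "a \<notin> Q e" "e = insert a (Q e)" for e a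
  proof -
    have "pp e w = 2 * w a * sum w (Q e) + pp (Q e) w" using pp_insert[OF fQ[OF e(1)] e(3)] e(4) by simp
    moreover have "pp (g e) w = 2 * w r * sum w (Q e) + pp (Q e) w"
      unfolding g_def using e(2) pp_insert[OF fQ[OF e(1)] rQ[OF e(1)]] by simp
    ultimately show ?thesis unfolding dl_def by (simp add: algebra_simps)
  qed
  have dl_s: "dl s = 2 * (w r - w ov) * (w v2 + sum w (Q s))"
  proof -
    have f: "finite (Q s)" using fQ[OF s(1)] .
    have "pp s w = 2 * w v2 * (w ov + sum w (Q s)) + (2 * w ov * sum w (Q s) + pp (Q s) w)"
      using pp_insert[of "insert ov (Q s)" v2 w] pp_insert[OF f sQ(3), of w] f sQ so(2) by simp
    moreover have "pp (g s) w = 2 * w r * (w v2 + sum w (Q s)) + (2 * w v2 * sum w (Q s) + pp (Q s) w)"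
      unfolding g_def using pp_insert[of "insert v2 (Q s)" r w] pp_insert[OF f sQ(2), of w] f sQ so(3) rQ[OF s(1)] by simp
    ultimately show ?thesis unfolding dl_def by (simp add: algebra_simps)
  qed
  have dl0: "dl e \<ge> 0" if e: "e \<in> E" for e
  proof (cases "e = s")
    case True
    have "w r - w ov \<ge> 0" using r v2V by simp
    moreover have "w v2 + sum w (Q s) \<ge> 0" using w0 by (simp add: sum_nonneg add_nonneg_nonneg)
    ultimately show ?thesis using True dl_s by simp
  next
    case False
    then obtain a where a: "a \<notin> Q e" "e = insert a (Q e)" "a \<in> V" using attach e by blast
    have "w r - w a \<ge> 0" using r a by simp
    moreover have "sum w (Q e) \<ge> 0" using w0 by (simp add: sum_nonneg)
    ultimately show ?thesis using dl_ord[OF e False a(1,2)] by simp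
  qed
  have GH: "QF G w \<le> QF H w"
  proof -
    have "(\<Sum>e\<in>E. pp e w) \<le> (\<Sum>e\<in>E. pp (g e) w)" using dl0 unfolding dl_def by (intro sum_mono) simp
    then show ?thesis unfolding QFG QFH using c0 by simp
  qed
  have S: "(\<Sum>i\<in>V. (w i)^2) > 0"
  proof -
    from x0 obtain v where v: "v \<in> V" "x v \<noteq> 0" by blast
    then show ?thesis using fV unfolding w_def by (intro sum_pos2[where i=v]) auto
  qed
  have c1: "cmod mu * (\<Sum>i\<in>V. (w i)^2) \<le> QF G w" unfolding w_def V_def using eig_le_QF[OF hg xe] .
  have c3: "QF H w \<le> L * (\<Sum>i\<in>V. (w i)^2)" using QF_le(1)[OF hgH pp0 pe, of w] VH by simp
  show le: "cmod mu \<le> lamk k (card (snd G) - 2)"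
    using c1 GH c3 S unfolding L_def m_def E_def by (meson mult_right_le_imp_le order_trans)
  assume eq: "cmod mu = lamk k (card (snd G) - 2)"
  then have eqL: "cmod mu = L" unfolding L_def m_def E_def .
  have c1': "L * (\<Sum>i\<in>V. (w i)^2) \<le> QF G w" using c1 eqL by simp
  have QHe: "QF H w = L * (\<Sum>i\<in>V. (w i)^2)" using c1' GH c3 by linarith
  have QGH: "QF G w = QF H w" using c1' GH c3 by linarith
  have prp: "\<forall>i\<in>V. \<forall>j\<in>V. adj H i j \<noteq> 0 \<longrightarrow> w i * p j = w j * p i"
    using QF_le(2)[OF hgH pp0 pe, of w] QHe VH by simp
  have pr: "p r = 1" unfolding p_def pvec_def by simp
  have adjr: "adj H r j > 0" if j: "j \<in> V" "j \<noteq> r" for j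
  proof -
    have "j \<in> fst H" using j VH by simp
    then have "j = v2 \<or> j \<in> I1 \<or> j \<in> I2 \<or> (\<exists>B\<in>P. j \<in> B)" unfolding H_def shape_def using j by auto
    then obtain f where "f \<in> snd H" "r \<in> f" "j \<in> f" unfolding H_def shape_def by auto
    then show ?thesis using adj_pos[OF hgH] j by blast
  qed
  have wp: "w j = w r * p j" if j: "j \<in> V" for j
  proof (cases "j = r")
    case True then show ?thesis using pr by simp
  next
    case False
    then have "w r * p j = w j * p r" using prp r(1) j adjr[OF j False] by force
    then show ?thesis using pr by simp
  qed
  have wrpos: "w r > 0"
  proof (rule ccontr)
    assume "\<not> w r > 0"
    then have "w r = 0" using w0[of r] by simp
    then have "\<forall>j\<in>V. w j = 0" using wp by simp
    then show False using S by simp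
  qed
  have wpos: "w j > 0" if "j \<in> V" for j using wp[OF that] wrpos pp0 VH that by simp
  have dlz: "\<forall>e\<in>E. dl e = 0"
  proof -
    have "(\<Sum>e\<in>E. dl e) = (\<Sum>e\<in>E. pp (g e) w) - (\<Sum>e\<in>E. pp e w)" unfolding dl_def by (simp add: sum_subtractf)
    also have "\<dots> = 0" using QGH unfolding QFG QFH using c0 by simp
    finally show ?thesis using sum_nonneg_eq_0_iff[OF fE] dl0 by blast
  qed
  have pmax: "z = r" if z: "z \<in> V" "p z = 1" "z \<noteq> v2" for z
  proof (rule ccontr)
    assume "z \<noteq> r"
    then have "p z < p r" using pvec_max[OF k ok, of z] z VH unfolding p_def H_def by auto
    then show False using z pr by simp
  qed
  have gid: "g e = e" if e: "e \<in> E" for e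
  proof (cases "e = s")
    case True
    have "dl s = 0" using dlz s(1) by blast
    moreover have "w v2 + sum w (Q s) > 0" using wpos v2V(1) w0 by (simp add: add_pos_nonneg sum_nonneg)
    ultimately have "w ov = w r" using dl_s by simp
    then have "p ov = 1" using wp[OF v2V(2)] wrpos by simp
    then have "ov = r" using pmax[OF v2V(2)] so(2) by auto
    then show ?thesis unfolding g_def using True sQ(1) by auto
  next
    case False
    obtain a where a: "a \<notin> Q e" "e = insert a (Q e)" "a \<in> V" using attach e False by blast
    have "dl e = 0" using dlz e by blast
    moreover have "sum w (Q e) > 0" using Qne[OF e] fQ[OF e] wpos QV[OF e] by (intro sum_pos) auto
    ultimately have "w a = w r" using dl_ord[OF e False a(1,2)] by simp
    then have pa: "p a = 1" using wp[OF a(3)] wrpos by simp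
    have "a = r"
    proof (cases "a = v2")
      case False then show ?thesis using pmax[OF a(3) pa] by simp
    next
      case True
      have "card P > 0" 
      proof (rule ccontr)
        assume "\<not> card P > 0"
        then have "m = 2" using cP m2 by simp
        then have "card E = 2" unfolding m_def .
        moreover have "card {s, t} = 2" using ts by simp
        moreover have "{s, t} \<subseteq> E" using s(1) t(1) by simp
        ultimately have "{s, t} = E" using fE by (metis card_subset_eq)
        then have "E = {s, t}" by simp
        then have "e = t" using e \<open>e \<noteq> s\<close> by auto
        then show False using True a(1) t(2) by simp
      qed
      then have "p a < p r" using pvec_max[OF k ok, of a] a(3) VH True so(3) unfolding p_def H_def by auto
      then show ?thesis using pa pr by simp
    qed
    then show ?thesis unfolding g_def using False a(2) by simp
  qed
  have "snd H = E" unfolding EH using gid by simp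
  then have "G = H" using VH unfolding V_def E_def by (simp add: prod_eq_iff)
  then show "\<exists>r v2 I1 I2 P. G = shape r v2 I1 I2 P \<and> shape_ok k r v2 I1 I2 P \<and> card P = card (snd G) - 2"
    using ok cP unfolding H_def m_def E_def by blast
qed


theorem theorem1p1:
  fixes G :: "'a hypergraph" and k n :: nat
  assumes "k \<ge> 3" and "unicyclic k G" and "card (fst G) = n"
  shows "spectral_radius G \<le> spectral_radius (Ustar k n) \<and>
         (spectral_radius G = spectral_radius (Ustar k n) \<longleftrightarrow> hg_iso G (Ustar k n))"
proof -
  note k = assms(1) and u = assms(2)
  have hg: "hypergraph G" and cV: "card (fst G) = (k - 1) * card (snd G)"
    using u unfolding unicyclic_def by auto
  define m where "m = card (snd G)"
  have m2: "m \<ge> 2" unfolding m_def using unicyclic_m2[OF k u] .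
  have n: "n = (k - 1) * m" using cV assms(3) unfolding m_def by simp
  define PB where "PB = blockf k ` {..<m-2}"
  have US: "Ustar k n = shape 0 1 {2..<k} {k..<2*k-2} PB"
    and okU: "shape_ok k (0::nat) 1 {2..<k} {k..<2*k-2} PB"
    and cPB: "card PB = m - 2"
    using Ustar_shape[OF k m2 n] unfolding PB_def by auto
  define L where "L = lamk k (m - 2)"
  have rU: "spectral_radius (Ustar k n) = L" unfolding US L_def using shape_sr(1)[OF k okU] cPB by simp
  have eU: "hg_eigenvalue (Ustar k n) (complex_of_real L)" unfolding US L_def using shape_sr(2)[OF k okU] cPB by simp
  have le: "spectral_radius G \<le> L"
    using sr_le[OF hg] core(1)[OF k u] unfolding L_def m_def by blast
  have eq1: "hg_iso G (Ustar k n)" if h: "spectral_radius G = L"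
  proof -
    obtain mu where mu: "hg_eigenvalue G mu" "cmod mu = spectral_radius G" using sr_in[OF hg] by blast
    then have "cmod mu = lamk k (card (snd G) - 2)" using h unfolding L_def m_def by simp
    then obtain r v2 I1 I2 P where G: "G = shape r v2 I1 I2 P" and ok: "shape_ok k r v2 I1 I2 P"
      and cP: "card P = card (snd G) - 2"
      using core(2)[OF k u mu(1)] by blast
    have "card P = card PB" using cP cPB unfolding m_def by simp
    then show ?thesis unfolding G US by (rule shape_iso[OF ok okU])
  qed
  have eq2: "spectral_radius G = L" if h: "hg_iso G (Ustar k n)"
  proof -
    have "hg_eigenvalue G (complex_of_real L)" by (rule iso_eig[OF hg h eU])
    then have "cmod (complex_of_real L) \<le> spectral_radius G" by (rule sr_ge[OF hg])
    then have "L \<le> spectral_radius G" by simp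
    then show ?thesis using le by simp
  qed
  show ?thesis unfolding rU using le eq1 eq2 by blast
qed


end
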